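(* There exists $C<\infty$ such that for every $N\ge1$ and every $(t,h)\in[0,\infty)^2$: \[ |\partial_t\bar F_N|+|\partial_h\bar F_N|\le C,\qquad |\partial_tF_N|\le C+\frac{C|W|}{\sqrt{Nt}},\qquad |\partial_hF_N|\le C+\frac{C|z|}{\sqrt{Nh}},\qquad \partial_h^2F_N\ge-\frac{C|z|}{N^{1/2}h^{3/2}}, \] all functions being evaluated at $(t,h)$.
   Context: Let $P$ be a probability measure on $\mathbb{R}$ with bounded support, and $P_N:=P^{\otimes N}$. Under a probability $\mathbb{P}$ (expectation $\mathbb{E}$), let $\bar x=(\bar x_1,\dots,\bar x_N)$ have i.i.d. entries of law $P$, let $W=(W_{ij})_{1\le i,j\le N}$ and $z=(z_i)_{1\le i\le N}$ be independent standard Gaussian variables, with $\bar x,W,z$ mutually independent. For $t,h\ge0$ and $x\in\mathbb{R}^N$ set \[ H_N(t,h,x):=\sqrt{\tfrac tN}\, x\cdot Wx+\tfrac tN (x\cdot\bar x)^2-\tfrac{t}{2N}|x|^4+\sqrt h\, z\cdot x+h\,x\cdot\bar x-\tfrac h2|x|^2, \] where $|x|$ is the Euclidean norm, $F_N(t,h):=\frac1N\log\int_{\mathbb{R}^N} e^{H_N(t,h,x)}\,dP_N(x)$ and $\bar F_N(t,h):=\mathbb{E}[F_N(t,h)]$. Also $|W|:=\sup\{|Wx|:x\in\mathbb{R}^N,|x|\le1\}$ is the operator norm. Bounds with a singular right side at $t=0$ or $h=0$ are understood as $+\infty$ there. *)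

theory Defs
  imports "HOL-Probability.Probability"
begin

text \<open>Vectors in R^N are represented as functions nat => real, only the
  coordinates 0..N-1 matter; matrices as nat => nat => real.\<close>

definition inner_N :: "nat \<Rightarrow> (nat \<Rightarrow> real) \<Rightarrow> (nat \<Rightarrow> real) \<Rightarrow> real" where
  "inner_N N x y = (\<Sum>i<N. x i * y i)"

definition norm_N :: "nat \<Rightarrow> (nat \<Rightarrow> real) \<Rightarrow> real" where
  "norm_N N x = sqrt (inner_N N x x)"

definition matvec_N :: "nat \<Rightarrow> (nat \<Rightarrow> nat \<Rightarrow> real) \<Rightarrow> (nat \<Rightarrow> real) \<Rightarrow> (nat \<Rightarrow> real)" where
  "matvec_N N W x = (\<lambda>i. \<Sum>j<N. W i j * x j)"

definition opnorm_N :: "nat \<Rightarrow> (nat \<Rightarrow> nat \<Rightarrow> real) \<Rightarrow> real" where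
  "opnorm_N N W = Sup {norm_N N (matvec_N N W x) | x. norm_N N x \<le> 1}"

definition gauss :: "real measure" where
  "gauss = density lborel (\<lambda>x. ennreal (std_normal_density x))"

definition H_N :: "nat \<Rightarrow> real \<Rightarrow> real \<Rightarrow> (nat \<Rightarrow> real) \<Rightarrow> (nat \<Rightarrow> nat \<Rightarrow> real)
    \<Rightarrow> (nat \<Rightarrow> real) \<Rightarrow> (nat \<Rightarrow> real) \<Rightarrow> real" where
  "H_N N t h xbar W z x =
     sqrt (t / N) * inner_N N x (matvec_N N W x)
     + t / N * (inner_N N x xbar)\<^sup>2
     - t / (2 * N) * (norm_N N x) ^ 4
     + sqrt h * inner_N N z x
     + h * inner_N N x xbar
     - h / 2 * (norm_N N x)\<^sup>2"

definition P_N :: "real measure \<Rightarrow> nat \<Rightarrow> (nat \<Rightarrow> real) measure" where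
  "P_N P N = PiM {..<N} (\<lambda>_. P)"

definition Omega :: "real measure \<Rightarrow> nat \<Rightarrow>
    ((nat \<Rightarrow> real) \<times> (nat \<Rightarrow> nat \<Rightarrow> real) \<times> (nat \<Rightarrow> real)) measure" where
  "Omega P N = P_N P N \<Otimes>\<^sub>M (PiM {..<N} (\<lambda>_. PiM {..<N} (\<lambda>_. gauss)) \<Otimes>\<^sub>M PiM {..<N} (\<lambda>_. gauss))"

definition F_N :: "real measure \<Rightarrow> nat \<Rightarrow> real \<Rightarrow> real \<Rightarrow>
    ((nat \<Rightarrow> real) \<times> (nat \<Rightarrow> nat \<Rightarrow> real) \<times> (nat \<Rightarrow> real)) \<Rightarrow> real" where
  "F_N P N t h \<omega> = (case \<omega> of (xbar, W, z) \<Rightarrow>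
     1 / N * ln (\<integral>x. exp (H_N N t h xbar W z x) \<partial>P_N P N))"

definition Fbar_N :: "real measure \<Rightarrow> nat \<Rightarrow> real \<Rightarrow> real \<Rightarrow> real" where
  "Fbar_N P N t h = (\<integral>\<omega>. F_N P N t h \<omega> \<partial>Omega P N)"

end

theory Submission
  imports Defs
begin

lemma deriv_integral:
  fixes f f' :: "real \<Rightarrow> 'a \<Rightarrow> real"
  assumes e: "e > 0"
    and int: "\<And>s. s \<in> ball t e \<Longrightarrow> integrable M (f s)"
    and meas': "f' t \<in> borel_measurable M"
    and der: "AE x in M. \<forall>s\<in>ball t e. ((\<lambda>s. f s x) has_real_derivative f' s x) (at s)"
    and g: "integrable M g"
    and bound: "AE x in M. \<forall>s\<in>ball t e. \<bar>f' s x\<bar> \<le> g x"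
  shows "((\<lambda>s. \<integral>x. f s x \<partial>M) has_real_derivative (\<integral>x. f' t x \<partial>M)) (at t)"
proof -
  have lip: "AE x in M. \<forall>s\<in>ball t e. \<bar>f s x - f t x\<bar> \<le> g x * \<bar>s - t\<bar>"
    using der bound
  proof eventually_elim
    case (elim x)
    show ?case
    proof
      fix s assume s: "s \<in> ball t e"
      have seg: "\<And>y. y \<in> closed_segment t s \<Longrightarrow> y \<in> ball t e"
        using s convex_ball[of t e] e
        by (meson centre_in_ball closed_segment_subset subsetD)
      show "\<bar>f s x - f t x\<bar> \<le> g x * \<bar>s - t\<bar>"
      proof (cases "s = t")
        case True then show ?thesis by simp
      next
        case False
        show ?thesis
        proof (cases "t < s")
          case True
          have "\<exists>z. t < z \<and> z < s \<and> f s x - f t x = (s - t) * f' z x"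
            apply (rule MVT2[OF True])
            using elim(1) seg True by (auto simp: closed_segment_eq_real_ivl)
          then obtain z where z: "t < z" "z < s" "f s x - f t x = (s - t) * f' z x" by blast
          have "z \<in> ball t e" using seg z by (auto simp: closed_segment_eq_real_ivl)
          then have "\<bar>f' z x\<bar> \<le> g x" using elim(2) by blast
          then show ?thesis using z True by (simp add: abs_mult mult.commute mult_left_mono)
        next
          case False
          then have ts: "s < t" using \<open>s \<noteq> t\<close> by simp
          have "\<exists>z. s < z \<and> z < t \<and> f t x - f s x = (t - s) * f' z x"
            apply (rule MVT2[OF ts])
            using elim(1) seg ts by (auto simp: closed_segment_eq_real_ivl)
          then obtain z where z: "s < z" "z < t" "f t x - f s x = (t - s) * f' z x" by blast
          have "z \<in> ball t e" using seg z by (auto simp: closed_segment_eq_real_ivl)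
          then have "\<bar>f' z x\<bar> \<le> g x" using elim(2) by blast
          moreover have "\<bar>f s x - f t x\<bar> = (t - s) * \<bar>f' z x\<bar>"
            using z ts by (simp add: abs_minus_commute[of "f s x"] abs_mult)
          ultimately show ?thesis using ts by (simp add: mult.commute mult_left_mono)
        qed
      qed
    qed
  qed
  have tin: "t \<in> ball t e" using e by simp
  show ?thesis
    unfolding has_field_derivative_iff
  proof (subst tendsto_at_iff_sequentially, intro allI impI)
    fix X :: "nat \<Rightarrow> real"
    assume X: "\<forall>i. X i \<in> UNIV - {t}" and Xt: "X \<longlonglongrightarrow> t"
    have "eventually (\<lambda>n. X n \<in> ball t e) sequentially"
      using Xt e by (simp add: tendsto_iff dist_commute)
    then obtain n0 where n0: "\<And>n. n \<ge> n0 \<Longrightarrow> X n \<in> ball t e"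
      by (auto simp: eventually_sequentially)
    define Y where "Y n = X (n + n0)" for n
    have Yb: "Y n \<in> ball t e" for n using n0 by (simp add: Y_def)
    have Yne: "Y n \<noteq> t" for n using X by (simp add: Y_def)
    have Yt: "Y \<longlonglongrightarrow> t" unfolding Y_def using Xt by (rule LIMSEQ_ignore_initial_segment)
    have Yat: "filterlim Y (at t) sequentially"
      using Yt Yne by (simp add: filterlim_at eventually_sequentially)
    have lim: "(\<lambda>n. \<integral>x. (f (Y n) x - f t x) / (Y n - t) \<partial>M) \<longlonglongrightarrow> (\<integral>x. f' t x \<partial>M)"
    proof (rule integral_dominated_convergence[where w=g])
      show "f' t \<in> borel_measurable M" by fact
      show "(\<lambda>x. (f (Y n) x - f t x) / (Y n - t)) \<in> borel_measurable M" for n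
        using int[OF Yb] int[OF tin] by measurable
      show "integrable M g" by fact
      show "AE x in M. (\<lambda>n. (f (Y n) x - f t x) / (Y n - t)) \<longlonglongrightarrow> f' t x"
        using der
      proof eventually_elim
        case (elim x)
        then have "((\<lambda>s. (f s x - f t x) / (s - t)) \<longlongrightarrow> f' t x) (at t)"
          using tin by (simp add: has_field_derivative_iff)
        from filterlim_compose[OF this Yat] show ?case by simp
      qed
      show "AE x in M. norm ((f (Y n) x - f t x) / (Y n - t)) \<le> g x" for n
        using lip
      proof eventually_elim
        case (elim x)
        then have "\<bar>f (Y n) x - f t x\<bar> \<le> g x * \<bar>Y n - t\<bar>" using Yb by blast
        then show ?case using Yne by (simp add: abs_divide divide_le_eq)
      qed
    qed
    have eq: "(\<integral>x. (f (Y n) x - f t x) / (Y n - t) \<partial>M) =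
        ((\<integral>x. f (Y n) x \<partial>M) - (\<integral>x. f t x \<partial>M)) / (Y n - t)" for n
      using int[OF Yb] int[OF tin] by (simp add: Bochner_Integration.integral_diff)
    from lim have "(\<lambda>n. ((\<integral>x. f (Y n) x \<partial>M) - (\<integral>x. f t x \<partial>M)) / (Y n - t)) \<longlonglongrightarrow> (\<integral>x. f' t x \<partial>M)"
      unfolding eq .
    then show "((\<lambda>s. ((\<integral>x. f s x \<partial>M) - (\<integral>x. f t x \<partial>M)) / (s - t)) \<circ> X) \<longlonglongrightarrow> (\<integral>x. f' t x \<partial>M)"
      unfolding Y_def comp_def by (rule LIMSEQ_offset)
  qed
qed

definition gw :: "('x\<Rightarrow>real) \<Rightarrow> ('x\<Rightarrow>real) \<Rightarrow> ('x\<Rightarrow>real) \<Rightarrow> real \<Rightarrow> 'x \<Rightarrow> real" where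
  "gw A B R u x = exp (u * A x + u\<^sup>2 * B x + R x)"

definition gZ :: "'x measure \<Rightarrow> ('x\<Rightarrow>real) \<Rightarrow> ('x\<Rightarrow>real) \<Rightarrow> ('x\<Rightarrow>real) \<Rightarrow> real \<Rightarrow> real" where
  "gZ M A B R u = (\<integral>x. gw A B R u x \<partial>M)"

definition gavg :: "'x measure \<Rightarrow> ('x\<Rightarrow>real) \<Rightarrow> ('x\<Rightarrow>real) \<Rightarrow> ('x\<Rightarrow>real) \<Rightarrow> real \<Rightarrow> ('x \<Rightarrow> real) \<Rightarrow> real" where
  "gavg M A B R u f = (\<integral>x. f x * gw A B R u x \<partial>M) / gZ M A B R u"

definition gL1 :: "'x measure \<Rightarrow> ('x\<Rightarrow>real) \<Rightarrow> ('x\<Rightarrow>real) \<Rightarrow> ('x\<Rightarrow>real) \<Rightarrow> real \<Rightarrow> real" where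
  "gL1 M A B R u = gavg M A B R u A + 2 * u * gavg M A B R u B"

definition gV :: "'x measure \<Rightarrow> ('x\<Rightarrow>real) \<Rightarrow> ('x\<Rightarrow>real) \<Rightarrow> ('x\<Rightarrow>real) \<Rightarrow> real \<Rightarrow> real" where
  "gV M A B R u = gavg M A B R u (\<lambda>x. (A x + 2 * u * B x)\<^sup>2) - (gavg M A B R u (\<lambda>x. A x + 2 * u * B x))\<^sup>2"

lemma lip_from_deriv:
  fixes f f' :: "real \<Rightarrow> real"
  assumes d: "\<And>u. (f has_real_derivative f' u) (at u)" and b: "\<And>u. \<bar>f' u\<bar> \<le> L"
  shows "\<bar>f s - f s'\<bar> \<le> L * \<bar>s - s'\<bar>"
proof -
  have main: "\<bar>f y - f x\<bar> \<le> L * (y - x)" if "x < y" for x y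
  proof -
    have "\<exists>z. x < z \<and> z < y \<and> f y - f x = (y - x) * f' z"
      by (rule MVT2[OF that]) (rule d)
    then obtain z where z: "x < z" "z < y" "f y - f x = (y - x) * f' z" by blast
    have "\<bar>f y - f x\<bar> = (y - x) * \<bar>f' z\<bar>" using z that by (simp add: abs_mult)
    also have "\<dots> \<le> (y - x) * L" by (rule mult_left_mono[OF b]) (use that in simp)
    finally show ?thesis by (simp add: mult.commute)
  qed
  consider "s < s'" | "s = s'" | "s' < s" by linarith
  then show ?thesis
  proof cases
    case 1 then show ?thesis using main[OF 1] by (simp add: abs_minus_commute)
  next
    case 2 then show ?thesis by simp
  next
    case 3 then show ?thesis using main[OF 3] by simp
  qed
qed

lemma sq_le_of_abs: "\<bar>x::real\<bar> \<le> c \<Longrightarrow> x\<^sup>2 \<le> c\<^sup>2"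
  using power_mono[of "\<bar>x\<bar>" c 2] by simp

locale gibbs = prob_space M for M :: "'x measure" +
  fixes A B R :: "'x \<Rightarrow> real" and a b r :: real
  assumes mA[measurable]: "A \<in> borel_measurable M"
    and mB[measurable]: "B \<in> borel_measurable M"
    and mR[measurable]: "R \<in> borel_measurable M"
    and bA: "AE x in M. \<bar>A x\<bar> \<le> a"
    and bB: "AE x in M. \<bar>B x\<bar> \<le> b"
    and bR: "AE x in M. \<bar>R x\<bar> \<le> r"
begin

abbreviation "w \<equiv> gw A B R"
abbreviation "Z \<equiv> gZ M A B R"
abbreviation "avg \<equiv> gavg M A B R"

lemma w_meas[measurable]: "w u \<in> borel_measurable M"
  unfolding gw_def by measurable

lemma w_pos: "w u x > 0" unfolding gw_def by simp

lemma w_bound: "AE x in M. w u x \<le> exp (\<bar>u\<bar> * a + u\<^sup>2 * b + r)"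
  using bA bB bR
proof eventually_elim
  case (elim x)
  have "\<bar>u * A x\<bar> \<le> \<bar>u\<bar> * a" using elim(1) by (simp add: abs_mult mult_left_mono)
  then have "u * A x \<le> \<bar>u\<bar> * a" by linarith
  moreover have "u\<^sup>2 * B x \<le> u\<^sup>2 * b" using elim(2) by (simp add: mult_left_mono)
  moreover have "R x \<le> r" using elim(3) by simp
  ultimately show ?case unfolding gw_def by simp
qed

lemma w_lower: "AE x in M. exp (- (\<bar>u\<bar> * a + u\<^sup>2 * b + r)) \<le> w u x"
  using bA bB bR
proof eventually_elim
  case (elim x)
  have "\<bar>u * A x\<bar> \<le> \<bar>u\<bar> * a" using elim(1) by (simp add: abs_mult mult_left_mono)
  then have "- (\<bar>u\<bar> * a) \<le> u * A x" by linarith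
  moreover have "\<bar>u\<^sup>2 * B x\<bar> \<le> u\<^sup>2 * b" using elim(2) by (simp add: abs_mult mult_left_mono)
  then have "- (u\<^sup>2 * b) \<le> u\<^sup>2 * B x" by linarith
  moreover have "- r \<le> R x" using elim(3) by simp
  ultimately show ?case unfolding gw_def by simp
qed

lemma integrable_bounded_AE:
  fixes f :: "'x \<Rightarrow> real"
  assumes "f \<in> borel_measurable M" "AE x in M. \<bar>f x\<bar> \<le> c"
  shows "integrable M f"
  by (rule Bochner_Integration.integrable_bound[where f="\<lambda>_. c"]) (use assms in auto)

lemma integrable_fw:
  assumes "f \<in> borel_measurable M" "AE x in M. \<bar>f x\<bar> \<le> c"
  shows "integrable M (\<lambda>x. f x * w u x)"
proof (rule integrable_bounded_AE)
  show "(\<lambda>x. f x * w u x) \<in> borel_measurable M" using assms(1) by measurable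
  show "AE x in M. \<bar>f x * w u x\<bar> \<le> c * exp (\<bar>u\<bar> * a + u\<^sup>2 * b + r)"
    using assms(2) w_bound[of u]
  proof eventually_elim
    case (elim x)
    then show ?case using w_pos[of u x]
      by (simp add: abs_mult mult_mono')
  qed
qed

lemma integrable_w: "integrable M (w u)"
  using integrable_fw[of "\<lambda>_. 1" 1 u] by simp

lemma Z_pos: "Z u > 0"
proof -
  have "exp (- (\<bar>u\<bar> * a + u\<^sup>2 * b + r)) \<le> Z u"
    unfolding gZ_def
    using integral_mono_AE[OF _ integrable_w w_lower[of u]] by (simp add: prob_space)
  moreover have "0 < exp (- (\<bar>u\<bar> * a + u\<^sup>2 * b + r))" by simp
  ultimately show ?thesis by linarith
qed

lemma avg_bound:
  assumes "f \<in> borel_measurable M" "AE x in M. \<bar>f x\<bar> \<le> c"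
  shows "\<bar>avg u f\<bar> \<le> c"
proof -
  have "\<bar>\<integral>x. f x * w u x \<partial>M\<bar> \<le> \<integral>x. \<bar>f x * w u x\<bar> \<partial>M"
    using integral_norm_bound[of M "\<lambda>x. f x * w u x"] by simp
  also have "\<dots> \<le> \<integral>x. c * w u x \<partial>M"
  proof (rule integral_mono_AE)
    show "integrable M (\<lambda>x. c * w u x)" using integrable_w by simp
    show "integrable M (\<lambda>x. \<bar>f x * w u x\<bar>)" using integrable_fw[OF assms] by simp
    show "AE x in M. \<bar>f x * w u x\<bar> \<le> c * w u x"
      using assms(2) by eventually_elim (simp add: abs_mult w_pos less_imp_le mult_right_mono)
  qed
  also have "\<dots> = c * Z u" unfolding gZ_def by simp
  finally show ?thesis unfolding gavg_def using Z_pos[of u] by (simp add: abs_divide divide_le_eq)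
qed

lemma AE_ex: "(AE x in M. P x) \<Longrightarrow> \<exists>x. P x"
proof (rule ccontr)
  assume "AE x in M. P x" "\<nexists>x. P x"
  then have "AE x in M. False" by simp
  then show False using AE_False by (simp add: emeasure_space_1)
qed

lemma a_nonneg: "a \<ge> 0" using AE_ex[OF bA] by force
lemma b_nonneg: "b \<ge> 0" using AE_ex[OF bB] by force
lemma r_nonneg: "r \<ge> 0" using AE_ex[OF bR] by force

definition "Z1 u = (\<integral>x. (A x + 2 * u * B x) * w u x \<partial>M)"
definition "Z2 u = (\<integral>x. ((A x + 2 * u * B x)\<^sup>2 + 2 * B x) * w u x \<partial>M)"

lemma w_deriv: "((\<lambda>s. w s x) has_real_derivative (A x + 2 * s * B x) * w s x) (at s)"
  unfolding gw_def
  by (auto intro!: derivative_eq_intros simp: algebra_simps power2_eq_square)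

lemma w1_deriv: "((\<lambda>s. (A x + 2 * s * B x) * w s x) has_real_derivative ((A x + 2 * s * B x)\<^sup>2 + 2 * B x) * w s x) (at s)"
  by (auto intro!: derivative_eq_intros w_deriv simp: algebra_simps power2_eq_square)

lemma w_bound_ball:
  assumes "\<bar>A x\<bar> \<le> a" "\<bar>B x\<bar> \<le> b" "\<bar>R x\<bar> \<le> r" "\<bar>s\<bar> \<le> U"
  shows "w s x \<le> exp (U * a + U\<^sup>2 * b + r)"
proof -
  have "s * A x \<le> U * a"
  proof -
    have "\<bar>s * A x\<bar> \<le> U * a" unfolding abs_mult by (rule mult_mono) (use assms(1,4) in auto)
    then show ?thesis by linarith
  qed
  moreover have "s\<^sup>2 * B x \<le> U\<^sup>2 * b"
  proof -
    have "s\<^sup>2 \<le> U\<^sup>2" using assms(4) by (rule sq_le_of_abs)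
    moreover have "B x \<le> b" using assms(2) by simp
    ultimately show ?thesis using b_nonneg
    proof -
      have "s\<^sup>2 * B x \<le> s\<^sup>2 * b" by (rule mult_left_mono) (use \<open>B x \<le> b\<close> in auto)
      also have "\<dots> \<le> U\<^sup>2 * b" by (rule mult_right_mono) (use \<open>s\<^sup>2 \<le> U\<^sup>2\<close> b_nonneg in auto)
      finally show ?thesis .
    qed
  qed
  moreover have "R x \<le> r" using assms(3) by simp
  ultimately show ?thesis unfolding gw_def by simp
qed

lemma bounded_lin:
  fixes f g :: "'x \<Rightarrow> real"
  assumes "AE x in M. \<bar>f x\<bar> \<le> c1" "AE x in M. \<bar>g x\<bar> \<le> c2"
  shows "AE x in M. \<bar>f x + k * g x\<bar> \<le> c1 + \<bar>k\<bar> * c2"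
  using assms
proof eventually_elim
  case (elim x)
  have "\<bar>k * g x\<bar> = \<bar>k\<bar> * \<bar>g x\<bar>" by (rule abs_mult)
  also have "\<dots> \<le> \<bar>k\<bar> * c2" by (rule mult_left_mono) (use elim(2) in auto)
  finally have "\<bar>k * g x\<bar> \<le> \<bar>k\<bar> * c2" .
  then show ?case using elim(1) by (smt (verit) abs_triangle_ineq)
qed

lemma bA2: "AE x in M. \<bar>A x + 2 * u * B x\<bar> \<le> a + \<bar>2 * u\<bar> * b"
  using bounded_lin[OF bA bB, of "2*u"] by (simp add: mult.assoc)

lemma Z_deriv: "(Z has_real_derivative Z1 t) (at t)"
  unfolding gZ_def Z1_def
proof (rule deriv_integral[where e=1 and g="\<lambda>_. (a + 2 * (\<bar>t\<bar>+1) * b) * exp ((\<bar>t\<bar>+1) * a + (\<bar>t\<bar>+1)\<^sup>2 * b + r)"])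
  show "integrable M (w s)" for s by (rule integrable_w)
  show "(\<lambda>x. (A x + 2 * t * B x) * w t x) \<in> borel_measurable M" by measurable
  show "AE x in M. \<forall>s\<in>ball t 1. ((\<lambda>s. w s x) has_real_derivative (A x + 2 * s * B x) * w s x) (at s)"
    by (simp add: w_deriv)
  show "integrable M (\<lambda>_. (a + 2 * (\<bar>t\<bar>+1) * b) * exp ((\<bar>t\<bar>+1) * a + (\<bar>t\<bar>+1)\<^sup>2 * b + r))" by simp
  show "AE x in M. \<forall>s\<in>ball t 1. \<bar>(A x + 2 * s * B x) * w s x\<bar> \<le> (a + 2 * (\<bar>t\<bar>+1) * b) * exp ((\<bar>t\<bar>+1) * a + (\<bar>t\<bar>+1)\<^sup>2 * b + r)"
    using bA bB bR
  proof eventually_elim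
    case (elim x)
    show ?case
    proof
      fix s assume "s \<in> ball t 1"
      then have s: "\<bar>s\<bar> \<le> \<bar>t\<bar> + 1" by (auto simp: dist_real_def)
      have "\<bar>A x + 2 * s * B x\<bar> \<le> a + 2 * (\<bar>t\<bar>+1) * b"
      proof -
        have "\<bar>2 * s * B x\<bar> \<le> 2 * (\<bar>t\<bar>+1) * b"
          using s elim(2) by (simp add: abs_mult mult_mono')
        then show ?thesis using elim(1) by linarith
      qed
      moreover have "w s x \<le> exp ((\<bar>t\<bar>+1) * a + (\<bar>t\<bar>+1)\<^sup>2 * b + r)"
        using w_bound_ball[OF elim s] .
      ultimately show "\<bar>(A x + 2 * s * B x) * w s x\<bar> \<le> (a + 2 * (\<bar>t\<bar>+1) * b) * exp ((\<bar>t\<bar>+1) * a + (\<bar>t\<bar>+1)\<^sup>2 * b + r)"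
        using w_pos[of s x] by (simp add: abs_mult mult_mono')
    qed
  qed
qed simp

lemma Z1_deriv: "(Z1 has_real_derivative Z2 t) (at t)"
  unfolding Z1_def[abs_def] Z2_def
proof (rule deriv_integral[where e=1 and g="\<lambda>_. ((a + 2 * (\<bar>t\<bar>+1) * b)\<^sup>2 + 2 * b) * exp ((\<bar>t\<bar>+1) * a + (\<bar>t\<bar>+1)\<^sup>2 * b + r)"])
  show "integrable M (\<lambda>x. (A x + 2 * s * B x) * w s x)" for s
    by (rule integrable_fw[OF _ bA2[of s]]) measurable
  show "(\<lambda>x. ((A x + 2 * t * B x)\<^sup>2 + 2 * B x) * w t x) \<in> borel_measurable M" by measurable
  show "AE x in M. \<forall>s\<in>ball t 1. ((\<lambda>s. (A x + 2 * s * B x) * w s x) has_real_derivative ((A x + 2 * s * B x)\<^sup>2 + 2 * B x) * w s x) (at s)"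
    by (simp add: w1_deriv)
  show "integrable M (\<lambda>_. ((a + 2 * (\<bar>t\<bar>+1) * b)\<^sup>2 + 2 * b) * exp ((\<bar>t\<bar>+1) * a + (\<bar>t\<bar>+1)\<^sup>2 * b + r))" by simp
  show "AE x in M. \<forall>s\<in>ball t 1. \<bar>((A x + 2 * s * B x)\<^sup>2 + 2 * B x) * w s x\<bar> \<le> ((a + 2 * (\<bar>t\<bar>+1) * b)\<^sup>2 + 2 * b) * exp ((\<bar>t\<bar>+1) * a + (\<bar>t\<bar>+1)\<^sup>2 * b + r)"
    using bA bB bR
  proof eventually_elim
    case (elim x)
    show ?case
    proof
      fix s assume "s \<in> ball t 1"
      then have s: "\<bar>s\<bar> \<le> \<bar>t\<bar> + 1" by (auto simp: dist_real_def)
      have "\<bar>A x + 2 * s * B x\<bar> \<le> a + 2 * (\<bar>t\<bar>+1) * b"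
      proof -
        have "\<bar>2 * s * B x\<bar> \<le> 2 * (\<bar>t\<bar>+1) * b"
          using s elim(2) by (simp add: abs_mult mult_mono')
        then show ?thesis using elim(1) by linarith
      qed
      then have "(A x + 2 * s * B x)\<^sup>2 \<le> (a + 2 * (\<bar>t\<bar>+1) * b)\<^sup>2"
        by (rule sq_le_of_abs)
      then have "\<bar>(A x + 2 * s * B x)\<^sup>2 + 2 * B x\<bar> \<le> (a + 2 * (\<bar>t\<bar>+1) * b)\<^sup>2 + 2 * b"
      proof -
        have B1: "B x \<le> b" "- B x \<le> b" using elim(2) by auto
        have "0 \<le> (A x + 2 * s * B x)\<^sup>2" "0 \<le> (a + 2 * (\<bar>t\<bar>+1) * b)\<^sup>2" by simp_all
        then show ?thesis using B1 \<open>(A x + 2 * s * B x)\<^sup>2 \<le> (a + 2 * (\<bar>t\<bar>+1) * b)\<^sup>2\<close>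
          by (intro abs_leI) linarith+
      qed
      moreover have "w s x \<le> exp ((\<bar>t\<bar>+1) * a + (\<bar>t\<bar>+1)\<^sup>2 * b + r)"
        using w_bound_ball[OF elim s] .
      ultimately show "\<bar>((A x + 2 * s * B x)\<^sup>2 + 2 * B x) * w s x\<bar> \<le> ((a + 2 * (\<bar>t\<bar>+1) * b)\<^sup>2 + 2 * b) * exp ((\<bar>t\<bar>+1) * a + (\<bar>t\<bar>+1)\<^sup>2 * b + r)"
        using w_pos[of s x] by (simp add: abs_mult mult_mono')
    qed
  qed
qed simp

lemma avg_lin:
  assumes [measurable]: "f \<in> borel_measurable M" "g \<in> borel_measurable M"
    and "AE x in M. \<bar>f x\<bar> \<le> c1" "AE x in M. \<bar>g x\<bar> \<le> c2"
  shows "avg u (\<lambda>x. f x + k * g x) = avg u f + k * avg u g"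
proof -
  have i1: "integrable M (\<lambda>x. f x * w u x)" by (rule integrable_fw[OF assms(1,3)])
  have i2: "integrable M (\<lambda>x. k * (g x * w u x))" using integrable_fw[OF assms(2,4)] by simp
  have "(\<integral>x. (f x + k * g x) * w u x \<partial>M) = (\<integral>x. f x * w u x + k * (g x * w u x) \<partial>M)"
    by (simp add: algebra_simps)
  also have "\<dots> = (\<integral>x. f x * w u x \<partial>M) + k * (\<integral>x. g x * w u x \<partial>M)"
    using i1 i2 by simp
  finally show ?thesis unfolding gavg_def by (simp add: add_divide_distrib)
qed

lemma avg_const: "avg u (\<lambda>x. c) = c"
  unfolding gavg_def gZ_def using Z_pos[of u] unfolding gZ_def by simp

lemma Z1_avg: "Z1 u / Z u = avg u A + 2 * u * avg u B"
proof -
  have "Z1 u / Z u = avg u (\<lambda>x. A x + (2 * u) * B x)"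
    unfolding Z1_def gavg_def by (simp add: mult.assoc)
  also have "\<dots> = avg u A + 2 * u * avg u B"
    by (rule avg_lin[OF mA mB bA bB])
  finally show ?thesis .
qed

abbreviation "V \<equiv> gV M A B R"
lemmas V_def = gV_def[of M A B R]

lemma var_bounds:
  assumes [measurable]: "f \<in> borel_measurable M" and bf: "AE x in M. \<bar>f x\<bar> \<le> c"
  shows "0 \<le> avg u (\<lambda>x. (f x)\<^sup>2) - (avg u f)\<^sup>2" "avg u (\<lambda>x. (f x)\<^sup>2) - (avg u f)\<^sup>2 \<le> c\<^sup>2"
proof -
  define m where "m = avg u f"
  have bf2: "AE x in M. \<bar>(f x)\<^sup>2\<bar> \<le> c\<^sup>2"
    using bf by eventually_elim (simp add: sq_le_of_abs)
  have c0: "c \<ge> 0" using AE_ex[OF bf] by force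
  have i0: "integrable M (\<lambda>x. (f x)\<^sup>2 * w u x)" by (rule integrable_fw[OF _ bf2]) measurable
  have i1: "integrable M (\<lambda>x. f x * w u x)" by (rule integrable_fw[OF assms])
  have "0 \<le> (\<integral>x. (f x - m)\<^sup>2 * w u x \<partial>M)"
    by (rule integral_nonneg_AE) (simp add: w_pos less_imp_le)
  also have "(\<integral>x. (f x - m)\<^sup>2 * w u x \<partial>M) =
      (\<integral>x. (f x)\<^sup>2 * w u x + (-2 * m) * (f x * w u x) + m\<^sup>2 * w u x \<partial>M)"
    by (simp add: power2_eq_square algebra_simps)
  also have "\<dots> = (\<integral>x. (f x)\<^sup>2 * w u x \<partial>M) + (-2 * m) * (\<integral>x. f x * w u x \<partial>M) + m\<^sup>2 * Z u"
    using i0 i1 integrable_w[of u] unfolding gZ_def by simp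
  also have "\<dots> = Z u * (avg u (\<lambda>x. (f x)\<^sup>2) - m\<^sup>2)"
    using Z_pos[of u] unfolding gavg_def m_def by (simp add: field_simps power2_eq_square)
  finally show "0 \<le> avg u (\<lambda>x. (f x)\<^sup>2) - (avg u f)\<^sup>2"
    using Z_pos[of u] unfolding m_def by (simp add: zero_le_mult_iff)
  have "avg u (\<lambda>x. (f x)\<^sup>2) \<le> c\<^sup>2"
  proof -
    have "\<bar>avg u (\<lambda>x. (f x)\<^sup>2)\<bar> \<le> c\<^sup>2" by (rule avg_bound[OF _ bf2]) measurable
    then show ?thesis by linarith
  qed
  then show "avg u (\<lambda>x. (f x)\<^sup>2) - (avg u f)\<^sup>2 \<le> c\<^sup>2" using zero_le_power2[of "avg u f"] by linarith
qed

lemma V_bounds: "0 \<le> V u" "V u \<le> (a + \<bar>2 * u\<bar> * b)\<^sup>2"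
  unfolding V_def using var_bounds[OF _ bA2[of u]] by auto

lemma Z2_avg: "Z2 u / Z u = V u + (Z1 u / Z u)\<^sup>2 + 2 * avg u B"
proof -
  have bq: "AE x in M. \<bar>(A x + 2 * u * B x)\<^sup>2\<bar> \<le> (a + \<bar>2 * u\<bar> * b)\<^sup>2"
    using bA2[of u] by eventually_elim (simp add: sq_le_of_abs)
  have "Z2 u / Z u = avg u (\<lambda>x. (A x + 2 * u * B x)\<^sup>2 + 2 * B x)"
    unfolding Z2_def gavg_def ..
  also have "\<dots> = avg u (\<lambda>x. (A x + 2 * u * B x)\<^sup>2) + 2 * avg u B"
    by (rule avg_lin[OF _ mB bq bB]) measurable
  also have "avg u (\<lambda>x. A x + 2 * u * B x) = Z1 u / Z u"
    unfolding Z1_def gavg_def ..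
  then have "avg u (\<lambda>x. (A x + 2 * u * B x)\<^sup>2) = V u + (Z1 u / Z u)\<^sup>2"
    unfolding V_def by simp
  finally show ?thesis .
qed

abbreviation "L1 \<equiv> gL1 M A B R"
lemmas L1_def = gL1_def[of M A B R]

lemma L_deriv: "((\<lambda>u. ln (Z u)) has_real_derivative L1 u) (at u)"
proof -
  have "((\<lambda>u. ln (Z u)) has_real_derivative inverse (Z u) * Z1 u) (at u)"
    by (rule DERIV_chain2[OF DERIV_ln[OF Z_pos] Z_deriv])
  then show ?thesis unfolding L1_def Z1_avg[symmetric] by (simp add: divide_inverse mult.commute)
qed

lemma L1_deriv: "(L1 has_real_derivative (V u + 2 * avg u B)) (at u)"
proof -
  have eq: "L1 = (\<lambda>u. Z1 u / Z u)" unfolding L1_def[abs_def] Z1_avg by simp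
  have "((\<lambda>u. Z1 u / Z u) has_real_derivative (Z2 u * Z u - Z1 u * Z1 u) / (Z u * Z u)) (at u)"
    by (rule DERIV_divide[OF Z1_deriv Z_deriv]) (use Z_pos[of u] in simp)
  moreover have "(Z2 u * Z u - Z1 u * Z1 u) / (Z u * Z u) = Z2 u / Z u - (Z1 u / Z u)\<^sup>2"
    using Z_pos[of u] by (simp add: field_simps power2_eq_square)
  ultimately show ?thesis unfolding eq Z2_avg by simp
qed

lemma lnZ_bound: "\<bar>ln (Z u)\<bar> \<le> \<bar>u\<bar> * a + u\<^sup>2 * b + r"
proof -
  have up: "Z u \<le> exp (\<bar>u\<bar> * a + u\<^sup>2 * b + r)"
    unfolding gZ_def
    using integral_mono_AE[OF integrable_w _ w_bound[of u]] by (simp add: prob_space)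
  have lo: "exp (- (\<bar>u\<bar> * a + u\<^sup>2 * b + r)) \<le> Z u"
    unfolding gZ_def
    using integral_mono_AE[OF _ integrable_w w_lower[of u]] by (simp add: prob_space)
  have "ln (Z u) \<le> ln (exp (\<bar>u\<bar> * a + u\<^sup>2 * b + r))"
    using up Z_pos[of u] by (subst ln_le_cancel_iff) auto
  moreover have "ln (exp (- (\<bar>u\<bar> * a + u\<^sup>2 * b + r))) \<le> ln (Z u)"
    using lo Z_pos[of u] by (subst ln_le_cancel_iff) auto
  ultimately show ?thesis by simp
qed

lemma L1_bound: "\<bar>L1 u\<bar> \<le> a + 2 * \<bar>u\<bar> * b"
proof -
  have "\<bar>avg u A\<bar> \<le> a" by (rule avg_bound[OF mA bA])
  moreover have "\<bar>avg u B\<bar> \<le> b" by (rule avg_bound[OF mB bB])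
  then have "\<bar>2 * u * avg u B\<bar> \<le> 2 * \<bar>u\<bar> * b" by (simp add: abs_mult mult_left_mono)
  ultimately show ?thesis unfolding L1_def by linarith
qed

lemma avg_lip:
  assumes "b = 0"
  shows "\<bar>avg s A - avg s' A\<bar> \<le> a\<^sup>2 * \<bar>s - s'\<bar>"
proof -
  have B0: "avg u B = 0" for u using avg_bound[OF mB bB, of u] assms by simp
  have "\<bar>L1 s - L1 s'\<bar> \<le> a\<^sup>2 * \<bar>s - s'\<bar>"
  proof (rule lip_from_deriv[OF L1_deriv])
    fix u
    show "\<bar>V u + 2 * avg u B\<bar> \<le> a\<^sup>2" using V_bounds[of u] assms B0 by simp
  qed
  then show ?thesis unfolding L1_def using B0 by simp
qed

end

definition resamp :: "'a measure \<Rightarrow> 'b measure \<Rightarrow> ('a \<Rightarrow> 'b \<Rightarrow> 'a) \<Rightarrow> bool" where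
  "resamp M G u \<longleftrightarrow> (\<lambda>p. u (fst p) (snd p)) \<in> measurable (M \<Otimes>\<^sub>M G) M \<and>
     (\<forall>f \<in> borel_measurable M. (\<integral>\<^sup>+x. f x \<partial>M) = (\<integral>\<^sup>+x. \<integral>\<^sup>+w. f (u x w) \<partial>G \<partial>M))"

lemma resamp_PiM:
  assumes Q: "prob_space Q" and I: "finite I" "k \<in> I"
  shows "resamp (PiM I (\<lambda>_. Q)) Q (\<lambda>x w. x(k := w))"
proof -
  interpret product_prob_space "\<lambda>_. Q" I
    by (rule product_prob_spaceI) (rule Q)
  interpret Qp: prob_space Q by (rule Q)
  define I' where "I' = I - {k}"
  have II: "I = insert k I'" "k \<notin> I'" "finite I'" using I by (auto simp: I'_def)
  have mupd[measurable]: "(\<lambda>p. (fst p) (k := snd p)) \<in> measurable (PiM I (\<lambda>_. Q) \<Otimes>\<^sub>M Q) (PiM I (\<lambda>_. Q))"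
    by (rule measurable_fun_upd[where J=I]) (use I in auto)
  show ?thesis unfolding resamp_def
  proof (intro conjI ballI)
    show "(\<lambda>p. (fst p) (k := snd p)) \<in> measurable (PiM I (\<lambda>_. Q) \<Otimes>\<^sub>M Q) (PiM I (\<lambda>_. Q))" by (rule mupd)
    fix f :: "_ \<Rightarrow> ennreal" assume f[measurable]: "f \<in> borel_measurable (PiM I (\<lambda>_. Q))"
    define \<phi> where "\<phi> x = (\<integral>\<^sup>+w. f (x(k := w)) \<partial>Q)" for x
    have m2: "(\<lambda>p. f ((fst p) (k := snd p))) \<in> borel_measurable (PiM I (\<lambda>_. Q) \<Otimes>\<^sub>M Q)"
      using measurable_comp[OF mupd f] by (simp add: comp_def)
    have m\<phi>[measurable]: "\<phi> \<in> borel_measurable (PiM I (\<lambda>_. Q))"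
      unfolding \<phi>_def using sigma_finite_measure.borel_measurable_nn_integral_fst[OF prob_space_imp_sigma_finite[OF Q] m2] by simp
    have "(\<integral>\<^sup>+x. \<phi> x \<partial>PiM I (\<lambda>_. Q)) = (\<integral>\<^sup>+x. \<integral>\<^sup>+y. \<phi> (x(k := y)) \<partial>Q \<partial>PiM I' (\<lambda>_. Q))"
      using product_nn_integral_insert[OF II(3,2), of \<phi>] m\<phi> unfolding II(1)[symmetric] by simp
    also have "\<dots> = (\<integral>\<^sup>+x. \<phi> x \<partial>PiM I' (\<lambda>_. Q))"
      unfolding \<phi>_def by (simp add: prob_space.emeasure_space_1[OF Q])
    also have "\<dots> = (\<integral>\<^sup>+x. f x \<partial>PiM I (\<lambda>_. Q))"
      unfolding \<phi>_def using product_nn_integral_insert[OF II(3,2), of f] f unfolding II(1)[symmetric] by simp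
    finally show "(\<integral>\<^sup>+x. f x \<partial>PiM I (\<lambda>_. Q)) = (\<integral>\<^sup>+x. \<integral>\<^sup>+w. f (x(k := w)) \<partial>Q \<partial>PiM I (\<lambda>_. Q))"
      unfolding \<phi>_def by simp
  qed
qed

lemma resamp_nested:
  assumes Q: "prob_space Q" and G: "sigma_finite_measure G" and I: "finite I" "k \<in> I"
    and v: "resamp Q G v"
  shows "resamp (PiM I (\<lambda>_. Q)) G (\<lambda>x w. x(k := v (x k) w))"
proof -
  let ?P = "PiM I (\<lambda>_. Q)"
  have rP: "resamp ?P Q (\<lambda>x w. x(k := w))" by (rule resamp_PiM[OF Q I])
  have mv[measurable]: "(\<lambda>p. v (fst p) (snd p)) \<in> measurable (Q \<Otimes>\<^sub>M G) Q"
    using v unfolding resamp_def by blast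
  have mh: "(\<lambda>p. v (fst p k) (snd p)) \<in> measurable (?P \<Otimes>\<^sub>M G) Q"
  proof -
    have "(\<lambda>p. (fst p k, snd p)) \<in> measurable (?P \<Otimes>\<^sub>M G) (Q \<Otimes>\<^sub>M G)"
      using I by measurable
    from measurable_comp[OF this mv] show ?thesis by (simp add: comp_def)
  qed
  have mupd[measurable]: "(\<lambda>p. (fst p) (k := v (fst p k) (snd p))) \<in> measurable (?P \<Otimes>\<^sub>M G) ?P"
    by (rule measurable_fun_upd[where J=I]) (use I mh in auto)
  show ?thesis unfolding resamp_def
  proof (intro conjI ballI)
    show "(\<lambda>p. (fst p) (k := v (fst p k) (snd p))) \<in> measurable (?P \<Otimes>\<^sub>M G) ?P" by (rule mupd)
    fix f :: "_ \<Rightarrow> ennreal" assume f[measurable]: "f \<in> borel_measurable ?P"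
    define \<phi> where "\<phi> x = (\<integral>\<^sup>+w. f (x(k := v (x k) w)) \<partial>G)" for x
    have m2: "(\<lambda>p. f ((fst p) (k := v (fst p k) (snd p)))) \<in> borel_measurable (?P \<Otimes>\<^sub>M G)"
      using measurable_comp[OF mupd f] by (simp add: comp_def)
    have m\<phi>: "\<phi> \<in> borel_measurable ?P"
      unfolding \<phi>_def using sigma_finite_measure.borel_measurable_nn_integral_fst[OF G m2] by simp
    have "(\<integral>\<^sup>+x. \<phi> x \<partial>?P) = (\<integral>\<^sup>+x. \<integral>\<^sup>+y. \<phi> (x(k := y)) \<partial>Q \<partial>?P)"
      using rP m\<phi> unfolding resamp_def by blast
    also have "\<dots> = (\<integral>\<^sup>+x. \<integral>\<^sup>+y. f (x(k := y)) \<partial>Q \<partial>?P)"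
    proof (rule nn_integral_cong)
      fix x assume x: "x \<in> space ?P"
      have mfx: "(\<lambda>y. f (x(k := y))) \<in> borel_measurable Q"
      proof -
        have "(\<lambda>y. x(k := y)) \<in> measurable Q ?P"
          by (rule measurable_fun_upd[where J=I]) (use I x in auto)
        from measurable_comp[OF this f] show ?thesis by (simp add: comp_def)
      qed
      have "(\<integral>\<^sup>+y. \<phi> (x(k := y)) \<partial>Q) = (\<integral>\<^sup>+y. \<integral>\<^sup>+w. f (x(k := v y w)) \<partial>G \<partial>Q)"
        unfolding \<phi>_def by simp
      also have "\<dots> = (\<integral>\<^sup>+y. f (x(k := y)) \<partial>Q)"
        using v mfx unfolding resamp_def by auto
      finally show "(\<integral>\<^sup>+y. \<phi> (x(k := y)) \<partial>Q) = (\<integral>\<^sup>+y. f (x(k := y)) \<partial>Q)" .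
    qed
    also have "\<dots> = (\<integral>\<^sup>+x. f x \<partial>?P)"
      using rP f unfolding resamp_def by auto
    finally show "(\<integral>\<^sup>+x. f x \<partial>?P) = (\<integral>\<^sup>+x. \<integral>\<^sup>+w. f (x(k := v (x k) w)) \<partial>G \<partial>?P)"
      unfolding \<phi>_def by simp
  qed
qed

lemma resamp_pair_right:
  assumes M2: "sigma_finite_measure M2" and G: "sigma_finite_measure G" and u: "resamp M2 G u"
  shows "resamp (M1 \<Otimes>\<^sub>M M2) G (\<lambda>p w. (fst p, u (snd p) w))"
proof -
  have mu[measurable]: "(\<lambda>p. u (fst p) (snd p)) \<in> measurable (M2 \<Otimes>\<^sub>M G) M2"
    using u unfolding resamp_def by blast
  have mupd[measurable]: "(\<lambda>q. (fst (fst q), u (snd (fst q)) (snd q))) \<in> measurable ((M1 \<Otimes>\<^sub>M M2) \<Otimes>\<^sub>M G) (M1 \<Otimes>\<^sub>M M2)"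
  proof -
    have "(\<lambda>q. (snd (fst q), snd q)) \<in> measurable ((M1 \<Otimes>\<^sub>M M2) \<Otimes>\<^sub>M G) (M2 \<Otimes>\<^sub>M G)" by measurable
    from measurable_comp[OF this mu] have "(\<lambda>q. u (snd (fst q)) (snd q)) \<in> measurable ((M1 \<Otimes>\<^sub>M M2) \<Otimes>\<^sub>M G) M2"
      by (simp add: comp_def)
    then show ?thesis by measurable
  qed
  show ?thesis unfolding resamp_def
  proof (intro conjI ballI)
    show "(\<lambda>q. (fst (fst q), u (snd (fst q)) (snd q))) \<in> measurable ((M1 \<Otimes>\<^sub>M M2) \<Otimes>\<^sub>M G) (M1 \<Otimes>\<^sub>M M2)"
      by (rule mupd)
    fix f :: "_ \<Rightarrow> ennreal" assume f[measurable]: "f \<in> borel_measurable (M1 \<Otimes>\<^sub>M M2)"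
    have m2: "(\<lambda>q. f (fst (fst q), u (snd (fst q)) (snd q))) \<in> borel_measurable ((M1 \<Otimes>\<^sub>M M2) \<Otimes>\<^sub>M G)"
      using measurable_comp[OF mupd f] by (simp add: comp_def)
    have m\<phi>: "(\<lambda>p. \<integral>\<^sup>+w. f (fst p, u (snd p) w) \<partial>G) \<in> borel_measurable (M1 \<Otimes>\<^sub>M M2)"
      using sigma_finite_measure.borel_measurable_nn_integral_fst[OF G m2] by simp
    have "(\<integral>\<^sup>+p. \<integral>\<^sup>+w. f (fst p, u (snd p) w) \<partial>G \<partial>(M1 \<Otimes>\<^sub>M M2)) =
        (\<integral>\<^sup>+x. \<integral>\<^sup>+y. \<integral>\<^sup>+w. f (x, u y w) \<partial>G \<partial>M2 \<partial>M1)"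
      using sigma_finite_measure.nn_integral_fst[OF M2 m\<phi>] by simp
    also have "\<dots> = (\<integral>\<^sup>+x. \<integral>\<^sup>+y. f (x, y) \<partial>M2 \<partial>M1)"
    proof (rule nn_integral_cong)
      fix x assume x: "x \<in> space M1"
      have "(\<lambda>y. f (x, y)) \<in> borel_measurable M2" using x by measurable
      then show "(\<integral>\<^sup>+y. \<integral>\<^sup>+w. f (x, u y w) \<partial>G \<partial>M2) = (\<integral>\<^sup>+y. f (x, y) \<partial>M2)"
        using u unfolding resamp_def by auto
    qed
    also have "\<dots> = (\<integral>\<^sup>+p. f p \<partial>(M1 \<Otimes>\<^sub>M M2))"
      using sigma_finite_measure.nn_integral_fst[OF M2 f] by simp
    finally show "(\<integral>\<^sup>+p. f p \<partial>(M1 \<Otimes>\<^sub>M M2)) = (\<integral>\<^sup>+p. \<integral>\<^sup>+w. f (fst p, u (snd p) w) \<partial>G \<partial>(M1 \<Otimes>\<^sub>M M2))"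
      by simp
  qed
qed

lemma resamp_pair_left:
  assumes M2: "sigma_finite_measure M2" and G: "sigma_finite_measure G" and u: "resamp M1 G u"
  shows "resamp (M1 \<Otimes>\<^sub>M M2) G (\<lambda>p w. (u (fst p) w, snd p))"
proof -
  have mu[measurable]: "(\<lambda>p. u (fst p) (snd p)) \<in> measurable (M1 \<Otimes>\<^sub>M G) M1"
    using u unfolding resamp_def by blast
  have mupd[measurable]: "(\<lambda>q. (u (fst (fst q)) (snd q), snd (fst q))) \<in> measurable ((M1 \<Otimes>\<^sub>M M2) \<Otimes>\<^sub>M G) (M1 \<Otimes>\<^sub>M M2)"
  proof -
    have "(\<lambda>q. (fst (fst q), snd q)) \<in> measurable ((M1 \<Otimes>\<^sub>M M2) \<Otimes>\<^sub>M G) (M1 \<Otimes>\<^sub>M G)" by measurable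
    from measurable_comp[OF this mu] have "(\<lambda>q. u (fst (fst q)) (snd q)) \<in> measurable ((M1 \<Otimes>\<^sub>M M2) \<Otimes>\<^sub>M G) M1"
      by (simp add: comp_def)
    then show ?thesis by measurable
  qed
  interpret pG: pair_sigma_finite M2 G using M2 G by (simp add: pair_sigma_finite_def)
  show ?thesis unfolding resamp_def
  proof (intro conjI ballI)
    show "(\<lambda>q. (u (fst (fst q)) (snd q), snd (fst q))) \<in> measurable ((M1 \<Otimes>\<^sub>M M2) \<Otimes>\<^sub>M G) (M1 \<Otimes>\<^sub>M M2)"
      by (rule mupd)
    fix f :: "_ \<Rightarrow> ennreal" assume f[measurable]: "f \<in> borel_measurable (M1 \<Otimes>\<^sub>M M2)"
    have m2: "(\<lambda>q. f (u (fst (fst q)) (snd q), snd (fst q))) \<in> borel_measurable ((M1 \<Otimes>\<^sub>M M2) \<Otimes>\<^sub>M G)"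
      using measurable_comp[OF mupd f] by (simp add: comp_def)
    have m\<phi>: "(\<lambda>p. \<integral>\<^sup>+w. f (u (fst p) w, snd p) \<partial>G) \<in> borel_measurable (M1 \<Otimes>\<^sub>M M2)"
      using sigma_finite_measure.borel_measurable_nn_integral_fst[OF G m2] by simp
    define \<psi> where "\<psi> x = (\<integral>\<^sup>+y. f (x, y) \<partial>M2)" for x
    have m\<psi>: "\<psi> \<in> borel_measurable M1"
      unfolding \<psi>_def using sigma_finite_measure.borel_measurable_nn_integral_fst[OF M2 f] by simp
    have "(\<integral>\<^sup>+p. \<integral>\<^sup>+w. f (u (fst p) w, snd p) \<partial>G \<partial>(M1 \<Otimes>\<^sub>M M2)) =
        (\<integral>\<^sup>+x. \<integral>\<^sup>+y. \<integral>\<^sup>+w. f (u x w, y) \<partial>G \<partial>M2 \<partial>M1)"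
      using sigma_finite_measure.nn_integral_fst[OF M2 m\<phi>] by simp
    also have "\<dots> = (\<integral>\<^sup>+x. \<integral>\<^sup>+w. \<psi> (u x w) \<partial>G \<partial>M1)"
    proof (rule nn_integral_cong)
      fix x assume x: "x \<in> space M1"
      have "(\<lambda>w. (x, w)) \<in> measurable G (M1 \<Otimes>\<^sub>M G)" using x by measurable
      from measurable_comp[OF this mu] have mux: "(\<lambda>w. u x w) \<in> measurable G M1" by (simp add: comp_def)
      have "(\<lambda>q. f (u x (snd q), fst q)) \<in> borel_measurable (M2 \<Otimes>\<^sub>M G)"
        using mux by measurable
      then show "(\<integral>\<^sup>+y. \<integral>\<^sup>+w. f (u x w, y) \<partial>G \<partial>M2) = (\<integral>\<^sup>+w. \<psi> (u x w) \<partial>G)"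
        unfolding \<psi>_def using pG.Fubini[of "\<lambda>q. f (u x (snd q), fst q)"] by simp
    qed
    also have "\<dots> = (\<integral>\<^sup>+x. \<psi> x \<partial>M1)"
      using u m\<psi> unfolding resamp_def by auto
    also have "\<dots> = (\<integral>\<^sup>+p. f p \<partial>(M1 \<Otimes>\<^sub>M M2))"
      unfolding \<psi>_def using sigma_finite_measure.nn_integral_fst[OF M2 f] by simp
    finally show "(\<integral>\<^sup>+p. f p \<partial>(M1 \<Otimes>\<^sub>M M2)) = (\<integral>\<^sup>+p. \<integral>\<^sup>+w. f (u (fst p) w, snd p) \<partial>G \<partial>(M1 \<Otimes>\<^sub>M M2))"
      by simp
  qed
qed

lemma resamp_distr:
  assumes G: "sigma_finite_measure G" and u: "resamp M G u"
  shows "distr (M \<Otimes>\<^sub>M G) M (\<lambda>p. u (fst p) (snd p)) = M"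
proof (rule measure_eqI)
  have mu[measurable]: "(\<lambda>p. u (fst p) (snd p)) \<in> measurable (M \<Otimes>\<^sub>M G) M"
    using u unfolding resamp_def by blast
  show "sets (distr (M \<Otimes>\<^sub>M G) M (\<lambda>p. u (fst p) (snd p))) = sets M" by simp
  fix A assume A: "A \<in> sets (distr (M \<Otimes>\<^sub>M G) M (\<lambda>p. u (fst p) (snd p)))"
  then have A': "A \<in> sets M" by simp
  have "emeasure (distr (M \<Otimes>\<^sub>M G) M (\<lambda>p. u (fst p) (snd p))) A =
      (\<integral>\<^sup>+x. indicator A x \<partial>distr (M \<Otimes>\<^sub>M G) M (\<lambda>p. u (fst p) (snd p)))"
    using A by simp
  also have "\<dots> = (\<integral>\<^sup>+p. indicator A (u (fst p) (snd p)) \<partial>(M \<Otimes>\<^sub>M G))"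
    using A' by (subst nn_integral_distr) auto
  also have "\<dots> = (\<integral>\<^sup>+x. \<integral>\<^sup>+w. indicator A (u x w) \<partial>G \<partial>M)"
  proof -
    have "(\<lambda>p. indicator A (u (fst p) (snd p)) :: ennreal) \<in> borel_measurable (M \<Otimes>\<^sub>M G)"
      using A' by measurable
    from sigma_finite_measure.nn_integral_fst[OF G this] show ?thesis by simp
  qed
  also have "\<dots> = (\<integral>\<^sup>+x. indicator A x \<partial>M)"
  proof -
    have "(\<lambda>x. indicator A x :: ennreal) \<in> borel_measurable M" using A' by measurable
    moreover have "\<forall>f\<in>borel_measurable M. (\<integral>\<^sup>+x. f x \<partial>M) = (\<integral>\<^sup>+x. \<integral>\<^sup>+w. f (u x w) \<partial>G \<partial>M)"
      using u unfolding resamp_def by blast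
    ultimately show ?thesis by (rule_tac sym, elim bspec)
  qed
  also have "\<dots> = emeasure M A" using A' by simp
  finally show "emeasure (distr (M \<Otimes>\<^sub>M G) M (\<lambda>p. u (fst p) (snd p))) A = emeasure M A" .
qed

lemma resamp_integral:
  fixes f :: "'a \<Rightarrow> real"
  assumes M: "sigma_finite_measure M" and G: "sigma_finite_measure G" and u: "resamp M G u"
    and f: "integrable M f"
  shows "(\<integral>x. f x \<partial>M) = (\<integral>x. \<integral>w. f (u x w) \<partial>G \<partial>M)"
    "integrable (M \<Otimes>\<^sub>M G) (\<lambda>p. f (u (fst p) (snd p)))"
proof -
  have mu[measurable]: "(\<lambda>p. u (fst p) (snd p)) \<in> measurable (M \<Otimes>\<^sub>M G) M"
    using u unfolding resamp_def by blast
  have d: "distr (M \<Otimes>\<^sub>M G) M (\<lambda>p. u (fst p) (snd p)) = M" by (rule resamp_distr[OF G u])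
  have fm[measurable]: "f \<in> borel_measurable M" using f by simp
  show i: "integrable (M \<Otimes>\<^sub>M G) (\<lambda>p. f (u (fst p) (snd p)))"
  proof -
    have "integrable (distr (M \<Otimes>\<^sub>M G) M (\<lambda>p. u (fst p) (snd p))) f" using f d by simp
    then show ?thesis by (rule integrable_distr_eq[THEN iffD1, rotated 2]) measurable
  qed
  interpret pair_sigma_finite M G using M G by (simp add: pair_sigma_finite_def)
  have "(\<integral>x. f x \<partial>M) = (\<integral>x. f x \<partial>distr (M \<Otimes>\<^sub>M G) M (\<lambda>p. u (fst p) (snd p)))" by (simp add: d)
  also have "\<dots> = (\<integral>p. f (u (fst p) (snd p)) \<partial>(M \<Otimes>\<^sub>M G))"
    by (rule integral_distr) measurable
  also have "\<dots> = (\<integral>x. \<integral>w. f (u x w) \<partial>G \<partial>M)"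
    using integral_fst'[OF i] by simp
  finally show "(\<integral>x. f x \<partial>M) = (\<integral>x. \<integral>w. f (u x w) \<partial>G \<partial>M)" .
qed

lemma gauss_prob: "prob_space gauss"
  unfolding gauss_def by (rule prob_space_normal_density) simp

lemma gauss_sf: "sigma_finite_measure gauss"
  using gauss_prob prob_space_imp_sigma_finite by blast

lemma sets_gauss[simp, measurable_cong]: "sets gauss = sets borel"
  unfolding gauss_def by simp

lemma gauss_int_x: "integrable gauss (\<lambda>x. x)" "(\<integral>x. x \<partial>gauss) = 0"
proof -
  show "integrable gauss (\<lambda>x. x)"
    using integrable_std_normal_distribution_moment[of 1] unfolding gauss_def by simp
  show "(\<integral>x. x \<partial>gauss) = 0"
    using integral_std_normal_distribution_moment_odd[of 1] unfolding gauss_def by simp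
qed

lemma gauss_int_x2: "integrable gauss (\<lambda>x. x\<^sup>2)" "(\<integral>x. x\<^sup>2 \<partial>gauss) = 1"
proof -
  show "integrable gauss (\<lambda>x. x\<^sup>2)"
    using integrable_std_normal_distribution_moment[of 2] unfolding gauss_def by simp
  show "(\<integral>x. x\<^sup>2 \<partial>gauss) = 1"
    using std_normal_distribution_even_moments(1)[of 1] unfolding gauss_def by simp
qed

lemma stein_bound:
  fixes g :: "real \<Rightarrow> real"
  assumes gm: "g \<in> borel_measurable borel" and gb: "\<And>w. \<bar>g w\<bar> \<le> c"
    and lip: "\<And>w. \<bar>g w - g 0\<bar> \<le> L * \<bar>w\<bar>"
  shows "\<bar>\<integral>w. w * g w \<partial>gauss\<bar> \<le> L"
proof -
  interpret prob_space gauss by (rule gauss_prob)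
  have gm'[measurable]: "g \<in> borel_measurable gauss" by (subst measurable_cong_sets[OF sets_gauss refl]) (rule gm)
  have iL: "integrable gauss (\<lambda>w. L * w\<^sup>2)" using gauss_int_x2(1) by simp
  have i1: "integrable gauss (\<lambda>w. w * (g w - g 0))"
  proof (rule Bochner_Integration.integrable_bound[OF iL])
    show "(\<lambda>w. w * (g w - g 0)) \<in> borel_measurable gauss" by measurable
    show "AE w in gauss. norm (w * (g w - g 0)) \<le> norm (L * w\<^sup>2)"
    proof (rule AE_I2)
      fix w assume "w \<in> space gauss"
      have "norm (w * (g w - g 0)) = \<bar>w\<bar> * \<bar>g w - g 0\<bar>" by (simp add: abs_mult)
      also have "\<dots> \<le> \<bar>w\<bar> * (L * \<bar>w\<bar>)" by (rule mult_left_mono[OF lip]) simp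
      also have "\<dots> = L * w\<^sup>2" by (simp add: power2_eq_square abs_mult_self)
      also have "\<dots> \<le> norm (L * w\<^sup>2)" by simp
      finally show "norm (w * (g w - g 0)) \<le> norm (L * w\<^sup>2)" .
    qed
  qed
  have i2: "integrable gauss (\<lambda>w. g 0 * w)" using gauss_int_x(1) by simp
  have "(\<integral>w. w * g w \<partial>gauss) = (\<integral>w. w * (g w - g 0) + g 0 * w \<partial>gauss)"
    by (simp add: algebra_simps)
  also have "\<dots> = (\<integral>w. w * (g w - g 0) \<partial>gauss) + g 0 * (\<integral>w. w \<partial>gauss)"
    using i1 i2 by simp
  also have "\<dots> = (\<integral>w. w * (g w - g 0) \<partial>gauss)" using gauss_int_x(2) by simp
  finally have eq: "(\<integral>w. w * g w \<partial>gauss) = (\<integral>w. w * (g w - g 0) \<partial>gauss)" .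
  have "\<bar>\<integral>w. w * (g w - g 0) \<partial>gauss\<bar> \<le> (\<integral>w. L * w\<^sup>2 \<partial>gauss)"
  proof -
    have "\<bar>\<integral>w. w * (g w - g 0) \<partial>gauss\<bar> \<le> (\<integral>w. \<bar>w * (g w - g 0)\<bar> \<partial>gauss)"
      using integral_norm_bound[of gauss "\<lambda>w. w * (g w - g 0)"] by simp
    also have "\<dots> \<le> (\<integral>w. L * w\<^sup>2 \<partial>gauss)"
    proof (rule integral_mono)
      show "integrable gauss (\<lambda>w. \<bar>w * (g w - g 0)\<bar>)" using i1 by simp
      show "integrable gauss (\<lambda>w. L * w\<^sup>2)" using gauss_int_x2(1) by simp
      fix w
      have "\<bar>w * (g w - g 0)\<bar> = \<bar>w\<bar> * \<bar>g w - g 0\<bar>" by (simp add: abs_mult)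
      also have "\<dots> \<le> \<bar>w\<bar> * (L * \<bar>w\<bar>)" by (rule mult_left_mono[OF lip]) simp
      also have "\<dots> = L * w\<^sup>2" by (simp add: power2_eq_square abs_mult_self)
      finally show "\<bar>w * (g w - g 0)\<bar> \<le> L * w\<^sup>2" .
    qed
    finally show ?thesis .
  qed
  also have "\<dots> = L" using gauss_int_x2(2) by simp
  finally show ?thesis using eq by simp
qed

lemma AE_abs_integral_bound:
  fixes f :: "'a \<Rightarrow> real"
  assumes "prob_space M" "AE x in M. \<bar>f x\<bar> \<le> c"
  shows "\<bar>\<integral>x. f x \<partial>M\<bar> \<le> c"
proof -
  interpret prob_space M by fact
  have c0: "0 \<le> c"
  proof (rule ccontr)
    assume nc: "\<not> 0 \<le> c"
    have "AE x in M. False" by (rule eventually_mono[OF assms(2)]) (use nc in auto)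
    then show False using AE_False by (simp add: emeasure_space_1)
  qed
  show ?thesis
  proof (cases "integrable M f")
    case True
    have "\<bar>\<integral>x. f x \<partial>M\<bar> \<le> (\<integral>x. \<bar>f x\<bar> \<partial>M)"
      using integral_norm_bound[of M f] by simp
    also have "\<dots> \<le> (\<integral>x. c \<partial>M)"
      by (rule integral_mono_AE) (use True assms(2) in auto)
    also have "\<dots> = c" by (simp add: prob_space)
    finally show ?thesis .
  next
    case False
    then show ?thesis using c0 by (simp add: not_integrable_integral_eq)
  qed
qed

locale ogibbs =
  fixes Om :: "'w measure" and mu :: "'x measure" and n :: real
    and J :: "'k set" and G :: "'k \<Rightarrow> 'w \<Rightarrow> real" and phi :: "'k \<Rightarrow> 'x \<Rightarrow> real"
    and B R :: "'w \<Rightarrow> 'x \<Rightarrow> real" and upd :: "'k \<Rightarrow> 'w \<Rightarrow> real \<Rightarrow> 'w"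
    and cphi cb :: real and rR :: "'w \<Rightarrow> real"
  assumes Om: "prob_space Om" and mu: "prob_space mu" and n: "n > 0" and J: "finite J"
    and mG[measurable]: "\<And>k. G k \<in> borel_measurable Om"
    and mphi[measurable]: "\<And>k. phi k \<in> borel_measurable mu"
    and mB[measurable]: "(\<lambda>p. B (fst p) (snd p)) \<in> borel_measurable (Om \<Otimes>\<^sub>M mu)"
    and mR[measurable]: "(\<lambda>p. R (fst p) (snd p)) \<in> borel_measurable (Om \<Otimes>\<^sub>M mu)"
    and mBx: "\<And>\<omega>. B \<omega> \<in> borel_measurable mu"
    and mRx: "\<And>\<omega>. R \<omega> \<in> borel_measurable mu"
    and bphi: "\<And>k. k \<in> J \<Longrightarrow> AE x in mu. \<bar>phi k x\<bar> \<le> cphi"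
    and bB_all: "\<And>\<omega>. \<exists>b. AE x in mu. \<bar>B \<omega> x\<bar> \<le> b"
    and bR_all: "\<And>\<omega>. \<exists>r. AE x in mu. \<bar>R \<omega> x\<bar> \<le> r"
    and bB: "AE \<omega> in Om. AE x in mu. \<bar>B \<omega> x\<bar> \<le> cb"
    and bR: "AE \<omega> in Om. AE x in mu. \<bar>R \<omega> x\<bar> \<le> rR \<omega>"
    and irR: "integrable Om rR"
    and rs: "\<And>k. k \<in> J \<Longrightarrow> resamp Om gauss (upd k)"
    and updG: "\<And>k w \<omega>. k \<in> J \<Longrightarrow> G k (upd k \<omega> w) = w"
    and updG': "\<And>k l w \<omega>. k \<in> J \<Longrightarrow> l \<in> J \<Longrightarrow> l \<noteq> k \<Longrightarrow> G l (upd k \<omega> w) = G l \<omega>"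
    and updB: "\<And>k w \<omega>. k \<in> J \<Longrightarrow> B (upd k \<omega> w) = B \<omega>"
    and updR: "\<And>k w \<omega>. k \<in> J \<Longrightarrow> R (upd k \<omega> w) = R \<omega>"
begin

interpretation Omp: prob_space Om by (rule Om)
interpretation mup: prob_space mu by (rule mu)

definition "A \<omega> x = (\<Sum>k\<in>J. G k \<omega> * phi k x)"
definition "aa \<omega> = (\<Sum>k\<in>J. \<bar>G k \<omega>\<bar>) * cphi"

lemma cphi_nonneg: "J \<noteq> {} \<Longrightarrow> 0 \<le> cphi"
proof -
  assume "J \<noteq> {}"
  then obtain k where k: "k \<in> J" by blast
  show ?thesis
  proof (rule ccontr)
    assume nc: "\<not> 0 \<le> cphi"
    have "AE x in mu. False" by (rule eventually_mono[OF bphi[OF k]]) (use nc in auto)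
    then show False using mup.AE_False by simp
  qed
qed

lemma cb_nonneg: "0 \<le> cb"
proof (rule ccontr)
  assume nc: "\<not> 0 \<le> cb"
  have "AE \<omega> in Om. AE x in mu. False"
    by (rule eventually_mono[OF bB]) (erule eventually_mono, use nc in auto)
  then have "AE \<omega> in Om. False" using mup.AE_False by simp
  then show False using Omp.AE_False by simp
qed

lemma mA: "A \<omega> \<in> borel_measurable mu" unfolding A_def by measurable

lemma mApair[measurable]: "(\<lambda>p. A (fst p) (snd p)) \<in> borel_measurable (Om \<Otimes>\<^sub>M mu)"
  unfolding A_def by measurable

lemma bA: "AE x in mu. \<bar>A \<omega> x\<bar> \<le> aa \<omega>"
proof -
  have "AE x in mu. \<forall>k\<in>J. \<bar>phi k x\<bar> \<le> cphi"
    using J bphi by (simp add: eventually_ball_finite)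
  then show ?thesis
  proof eventually_elim
    case (elim x)
    have "\<bar>A \<omega> x\<bar> \<le> (\<Sum>k\<in>J. \<bar>G k \<omega> * phi k x\<bar>)" unfolding A_def by (rule sum_abs)
    also have "\<dots> \<le> (\<Sum>k\<in>J. \<bar>G k \<omega>\<bar> * cphi)"
      by (rule sum_mono) (use elim in \<open>auto simp: abs_mult intro: mult_left_mono\<close>)
    also have "\<dots> = aa \<omega>" unfolding aa_def by (simp add: sum_distrib_right)
    finally show ?case .
  qed
qed

lemma gib_ex: "\<exists>b r. gibbs mu (A \<omega>) (B \<omega>) (R \<omega>) (aa \<omega>) b r"
proof -
  obtain b where b: "AE x in mu. \<bar>B \<omega> x\<bar> \<le> b" using bB_all by blast
  obtain r where r: "AE x in mu. \<bar>R \<omega> x\<bar> \<le> r" using bR_all by blast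
  have "gibbs mu (A \<omega>) (B \<omega>) (R \<omega>) (aa \<omega>) b r"
    unfolding gibbs_def gibbs_axioms_def using mu mA mBx mRx bA b r by blast
  then show ?thesis by blast
qed

lemma gib_AE: "AE \<omega> in Om. gibbs mu (A \<omega>) (B \<omega>) (R \<omega>) (aa \<omega>) cb (rR \<omega>)"
  using bB bR
proof eventually_elim
  case (elim \<omega>)
  then show ?case unfolding gibbs_def gibbs_axioms_def using mu mA mBx mRx bA by blast
qed

definition "psi \<omega> u = ln (gZ mu (A \<omega>) (B \<omega>) (R \<omega>) u) / n"
definition "d1 \<omega> u = gL1 mu (A \<omega>) (B \<omega>) (R \<omega>) u / n"
definition "d2 \<omega> u = (gV mu (A \<omega>) (B \<omega>) (R \<omega>) u + 2 * gavg mu (A \<omega>) (B \<omega>) (R \<omega>) u (B \<omega>)) / n"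

lemma psi_deriv: "((\<lambda>u. psi \<omega> u) has_real_derivative d1 \<omega> u) (at u)"
proof -
  obtain b r where "gibbs mu (A \<omega>) (B \<omega>) (R \<omega>) (aa \<omega>) b r" using gib_ex by blast
  then interpret g: gibbs mu "A \<omega>" "B \<omega>" "R \<omega>" "aa \<omega>" b r .
  show ?thesis unfolding psi_def[abs_def] d1_def
    by (rule DERIV_cdivide[OF g.L_deriv])
qed

lemma d1_deriv: "((\<lambda>u. d1 \<omega> u) has_real_derivative d2 \<omega> u) (at u)"
proof -
  obtain b r where "gibbs mu (A \<omega>) (B \<omega>) (R \<omega>) (aa \<omega>) b r" using gib_ex by blast
  then interpret g: gibbs mu "A \<omega>" "B \<omega>" "R \<omega>" "aa \<omega>" b r .
  show ?thesis unfolding d1_def[abs_def] d2_def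
    by (rule DERIV_cdivide[OF g.L1_deriv])
qed

lemma param_int_meas:
  fixes f :: "'w \<Rightarrow> 'x \<Rightarrow> real"
  assumes "(\<lambda>p. f (fst p) (snd p)) \<in> borel_measurable (Om \<Otimes>\<^sub>M mu)"
  shows "(\<lambda>\<omega>. \<integral>x. f \<omega> x \<partial>mu) \<in> borel_measurable Om"
proof -
  have "(\<lambda>(x, y). f x y) = (\<lambda>p. f (fst p) (snd p))" by (auto simp: fun_eq_iff)
  then have "(\<lambda>(x, y). f x y) \<in> borel_measurable (Om \<Otimes>\<^sub>M mu)" using assms by simp
  from sigma_finite_measure.borel_measurable_lebesgue_integral[OF prob_space_imp_sigma_finite[OF mu] this]
  show ?thesis .
qed

lemma mw_pair: "(\<lambda>p. gw (A (fst p)) (B (fst p)) (R (fst p)) u (snd p)) \<in> borel_measurable (Om \<Otimes>\<^sub>M mu)"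
  unfolding gw_def by measurable

lemma mZ[measurable]: "(\<lambda>\<omega>. gZ mu (A \<omega>) (B \<omega>) (R \<omega>) u) \<in> borel_measurable Om"
  unfolding gZ_def by (rule param_int_meas[OF mw_pair])

lemma m_gavg:
  assumes "(\<lambda>p. f (fst p) (snd p)) \<in> borel_measurable (Om \<Otimes>\<^sub>M mu)"
  shows "(\<lambda>\<omega>. gavg mu (A \<omega>) (B \<omega>) (R \<omega>) u (f \<omega>)) \<in> borel_measurable Om"
proof -
  have "(\<lambda>p. f (fst p) (snd p) * gw (A (fst p)) (B (fst p)) (R (fst p)) u (snd p)) \<in> borel_measurable (Om \<Otimes>\<^sub>M mu)"
    using assms mw_pair by (rule borel_measurable_times)
  note [measurable] = param_int_meas[OF this]
  show ?thesis unfolding gavg_def by measurable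
qed

lemma m_psi[measurable]: "(\<lambda>\<omega>. psi \<omega> u) \<in> borel_measurable Om"
  unfolding psi_def by measurable

lemma m_d1[measurable]: "(\<lambda>\<omega>. d1 \<omega> u) \<in> borel_measurable Om"
proof -
  note [measurable] = m_gavg[OF mApair] m_gavg[OF mB]
  show ?thesis unfolding d1_def gL1_def by measurable
qed

lemma m_d2[measurable]: "(\<lambda>\<omega>. d2 \<omega> u) \<in> borel_measurable Om"
proof -
  have m1: "(\<lambda>p. A (fst p) (snd p) + 2 * u * B (fst p) (snd p)) \<in> borel_measurable (Om \<Otimes>\<^sub>M mu)"
    by measurable
  have m2: "(\<lambda>p. (A (fst p) (snd p) + 2 * u * B (fst p) (snd p))\<^sup>2) \<in> borel_measurable (Om \<Otimes>\<^sub>M mu)"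
    by measurable
  have [measurable]: "(\<lambda>\<omega>. gavg mu (A \<omega>) (B \<omega>) (R \<omega>) u (\<lambda>x. (A \<omega> x + 2 * u * B \<omega> x)\<^sup>2)) \<in> borel_measurable Om"
    using m_gavg[OF m2] by simp
  have [measurable]: "(\<lambda>\<omega>. gavg mu (A \<omega>) (B \<omega>) (R \<omega>) u (\<lambda>x. A \<omega> x + 2 * u * B \<omega> x)) \<in> borel_measurable Om"
    using m_gavg[OF m1] by simp
  note [measurable] = m_gavg[OF mB]
  show ?thesis unfolding d2_def gV_def by measurable
qed

lemma int_G2: assumes k: "k \<in> J" shows "integrable Om (\<lambda>\<omega>. (G k \<omega>)\<^sup>2)"
proof (rule integrableI_bounded)
  show "(\<lambda>\<omega>. (G k \<omega>)\<^sup>2) \<in> borel_measurable Om" by measurable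
  have r: "resamp Om gauss (upd k)" by (rule rs[OF k])
  have mf: "(\<lambda>\<omega>. ennreal (norm ((G k \<omega>)\<^sup>2))) \<in> borel_measurable Om" by measurable
  have "(\<integral>\<^sup>+\<omega>. ennreal (norm ((G k \<omega>)\<^sup>2)) \<partial>Om) =
      (\<integral>\<^sup>+\<omega>. \<integral>\<^sup>+w. ennreal (norm ((G k (upd k \<omega> w))\<^sup>2)) \<partial>gauss \<partial>Om)"
    using r mf unfolding resamp_def by blast
  also have "\<dots> = (\<integral>\<^sup>+\<omega>. \<integral>\<^sup>+w. ennreal (w\<^sup>2) \<partial>gauss \<partial>Om)"
    using updG[OF k] by simp
  also have "\<dots> = (\<integral>\<^sup>+\<omega>. ennreal 1 \<partial>Om)"
  proof -
    have "(\<integral>\<^sup>+w. ennreal (w\<^sup>2) \<partial>gauss) = ennreal (\<integral>w. w\<^sup>2 \<partial>gauss)"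
      by (rule nn_integral_eq_integral[OF gauss_int_x2(1)]) simp
    then show ?thesis using gauss_int_x2(2) by simp
  qed
  also have "\<dots> = 1" by (simp add: Omp.emeasure_space_1)
  finally show "(\<integral>\<^sup>+\<omega>. ennreal (norm ((G k \<omega>)\<^sup>2)) \<partial>Om) < \<infinity>" by simp
qed

lemma int_G: assumes k: "k \<in> J" shows "integrable Om (G k)"
proof (rule Bochner_Integration.integrable_bound[where f="\<lambda>\<omega>. 1 + (G k \<omega>)\<^sup>2"])
  show "integrable Om (\<lambda>\<omega>. 1 + (G k \<omega>)\<^sup>2)" using int_G2[OF k] by simp
  show "G k \<in> borel_measurable Om" by measurable
  show "AE \<omega> in Om. norm (G k \<omega>) \<le> norm (1 + (G k \<omega>)\<^sup>2)"
  proof (rule AE_I2)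
    fix \<omega>
    have "\<bar>G k \<omega>\<bar> \<le> 1 + (G k \<omega>)\<^sup>2"
    proof (cases "\<bar>G k \<omega>\<bar> \<le> 1")
      case True then show ?thesis using zero_le_power2[of "G k \<omega>"] by linarith
    next
      case False
      then have "\<bar>G k \<omega>\<bar> * 1 \<le> \<bar>G k \<omega>\<bar> * \<bar>G k \<omega>\<bar>" by (intro mult_left_mono) auto
      then show ?thesis by (simp add: power2_eq_square)
    qed
    then show "norm (G k \<omega>) \<le> norm (1 + (G k \<omega>)\<^sup>2)" by simp
  qed
qed

lemma m_aa[measurable]: "aa \<in> borel_measurable Om" unfolding aa_def by measurable

lemma int_aa: "integrable Om aa"
  unfolding aa_def using int_G by (auto intro!: Bochner_Integration.integrable_sum)

lemma int_aa2: "integrable Om (\<lambda>\<omega>. (aa \<omega>)\<^sup>2)"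
proof (rule Bochner_Integration.integrable_bound[where f="\<lambda>\<omega>. cphi\<^sup>2 * (real (card J) * (\<Sum>k\<in>J. (G k \<omega>)\<^sup>2))"])
  show "integrable Om (\<lambda>\<omega>. cphi\<^sup>2 * (real (card J) * (\<Sum>k\<in>J. (G k \<omega>)\<^sup>2)))"
    using int_G2 by (auto intro!: Bochner_Integration.integrable_sum)
  show "(\<lambda>\<omega>. (aa \<omega>)\<^sup>2) \<in> borel_measurable Om" by measurable
  show "AE \<omega> in Om. norm ((aa \<omega>)\<^sup>2) \<le> norm (cphi\<^sup>2 * (real (card J) * (\<Sum>k\<in>J. (G k \<omega>)\<^sup>2)))"
  proof (rule AE_I2)
    fix \<omega>
    have cs: "(\<Sum>k\<in>J. \<bar>G k \<omega>\<bar> * 1)\<^sup>2 \<le> (\<Sum>k\<in>J. (\<bar>G k \<omega>\<bar>)\<^sup>2) * (\<Sum>k\<in>J. 1\<^sup>2)"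
      by (rule Cauchy_Schwarz_ineq_sum)
    have "(aa \<omega>)\<^sup>2 = cphi\<^sup>2 * (\<Sum>k\<in>J. \<bar>G k \<omega>\<bar> * 1)\<^sup>2" unfolding aa_def by (simp add: power_mult_distrib)
    also have "\<dots> \<le> cphi\<^sup>2 * ((\<Sum>k\<in>J. (G k \<omega>)\<^sup>2) * real (card J))"
      by (rule mult_left_mono) (use cs in simp_all)
    finally show "norm ((aa \<omega>)\<^sup>2) \<le> norm (cphi\<^sup>2 * (real (card J) * (\<Sum>k\<in>J. (G k \<omega>)\<^sup>2)))"
      by (simp add: mult.commute sum_nonneg)
  qed
qed

definition "Phi u = (\<integral>\<omega>. psi \<omega> u \<partial>Om)"
definition "Phi1 u = (\<integral>\<omega>. d1 \<omega> u \<partial>Om)"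
definition "Phi2 u = (\<integral>\<omega>. d2 \<omega> u \<partial>Om)"

lemma psi_bound: "AE \<omega> in Om. \<bar>psi \<omega> u\<bar> \<le> (\<bar>u\<bar> * aa \<omega> + u\<^sup>2 * cb + rR \<omega>) / n"
  using gib_AE
proof eventually_elim
  case (elim \<omega>)
  interpret g: gibbs mu "A \<omega>" "B \<omega>" "R \<omega>" "aa \<omega>" cb "rR \<omega>" by (rule elim)
  show ?case unfolding psi_def using g.lnZ_bound[of u] n by (simp add: abs_divide divide_right_mono)
qed

lemma d1_bound: "AE \<omega> in Om. \<forall>s. \<bar>d1 \<omega> s\<bar> \<le> (aa \<omega> + 2 * \<bar>s\<bar> * cb) / n"
  using gib_AE
proof eventually_elim
  case (elim \<omega>)
  interpret g: gibbs mu "A \<omega>" "B \<omega>" "R \<omega>" "aa \<omega>" cb "rR \<omega>" by (rule elim)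
  show ?case unfolding d1_def using g.L1_bound n by (simp add: abs_divide divide_right_mono)
qed

lemma d2_bound: "AE \<omega> in Om. \<forall>s. \<bar>d2 \<omega> s\<bar> \<le> ((aa \<omega> + 2 * \<bar>s\<bar> * cb)\<^sup>2 + 2 * cb) / n"
  using gib_AE
proof eventually_elim
  case (elim \<omega>)
  interpret g: gibbs mu "A \<omega>" "B \<omega>" "R \<omega>" "aa \<omega>" cb "rR \<omega>" by (rule elim)
  show ?case
  proof
    fix s
    have v: "0 \<le> g.V s" "g.V s \<le> (aa \<omega> + \<bar>2 * s\<bar> * cb)\<^sup>2" by (rule g.V_bounds)+
    have b: "\<bar>g.avg s (B \<omega>)\<bar> \<le> cb" by (rule g.avg_bound[OF g.mB g.bB])
    have "\<bar>g.V s + 2 * g.avg s (B \<omega>)\<bar> \<le> (aa \<omega> + 2 * \<bar>s\<bar> * cb)\<^sup>2 + 2 * cb"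
      using v b by (simp add: abs_mult abs_le_iff)
    then show "\<bar>d2 \<omega> s\<bar> \<le> ((aa \<omega> + 2 * \<bar>s\<bar> * cb)\<^sup>2 + 2 * cb) / n"
      unfolding d2_def using n by (simp add: abs_divide divide_right_mono)
  qed
qed

lemma int_psi: "integrable Om (\<lambda>\<omega>. psi \<omega> u)"
proof (rule Bochner_Integration.integrable_bound[where f="\<lambda>\<omega>. (\<bar>u\<bar> * aa \<omega> + u\<^sup>2 * cb + rR \<omega>) / n"])
  show "integrable Om (\<lambda>\<omega>. (\<bar>u\<bar> * aa \<omega> + u\<^sup>2 * cb + rR \<omega>) / n)"
    using int_aa irR by simp
  show "(\<lambda>\<omega>. psi \<omega> u) \<in> borel_measurable Om" by measurable
  show "AE \<omega> in Om. norm (psi \<omega> u) \<le> norm ((\<bar>u\<bar> * aa \<omega> + u\<^sup>2 * cb + rR \<omega>) / n)"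
    using psi_bound[of u] by eventually_elim (metis abs_ge_self order.trans real_norm_def)
qed

lemma int_d1: "integrable Om (\<lambda>\<omega>. d1 \<omega> u)"
proof (rule Bochner_Integration.integrable_bound[where f="\<lambda>\<omega>. (aa \<omega> + 2 * \<bar>u\<bar> * cb) / n"])
  show "integrable Om (\<lambda>\<omega>. (aa \<omega> + 2 * \<bar>u\<bar> * cb) / n)"
    using int_aa by simp
  show "(\<lambda>\<omega>. d1 \<omega> u) \<in> borel_measurable Om" by measurable
  show "AE \<omega> in Om. norm (d1 \<omega> u) \<le> norm ((aa \<omega> + 2 * \<bar>u\<bar> * cb) / n)"
    using d1_bound by eventually_elim (metis abs_ge_self order.trans real_norm_def)
qed

lemma Phi_deriv: "(Phi has_real_derivative Phi1 t) (at t)"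
  unfolding Phi_def[abs_def] Phi1_def
proof (rule deriv_integral[where e=1 and g="\<lambda>\<omega>. (aa \<omega> + 2 * (\<bar>t\<bar> + 1) * cb) / n"])
  show "integrable Om (\<lambda>\<omega>. psi \<omega> s)" for s by (rule int_psi)
  show "(\<lambda>\<omega>. d1 \<omega> t) \<in> borel_measurable Om" by measurable
  show "AE \<omega> in Om. \<forall>s\<in>ball t 1. ((\<lambda>s. psi \<omega> s) has_real_derivative d1 \<omega> s) (at s)"
    by (simp add: psi_deriv)
  show "integrable Om (\<lambda>\<omega>. (aa \<omega> + 2 * (\<bar>t\<bar> + 1) * cb) / n)" using int_aa by simp
  show "AE \<omega> in Om. \<forall>s\<in>ball t 1. \<bar>d1 \<omega> s\<bar> \<le> (aa \<omega> + 2 * (\<bar>t\<bar> + 1) * cb) / n"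
    using d1_bound
  proof eventually_elim
    case (elim \<omega>)
    show ?case
    proof
      fix s assume "s \<in> ball t 1"
      then have s: "\<bar>s\<bar> \<le> \<bar>t\<bar> + 1" by (auto simp: dist_real_def)
      have "2 * \<bar>s\<bar> * cb \<le> 2 * (\<bar>t\<bar> + 1) * cb" using s cb_nonneg by (simp add: mult_right_mono)
      then have "(aa \<omega> + 2 * \<bar>s\<bar> * cb) / n \<le> (aa \<omega> + 2 * (\<bar>t\<bar> + 1) * cb) / n"
        using n by (simp add: divide_right_mono)
      then show "\<bar>d1 \<omega> s\<bar> \<le> (aa \<omega> + 2 * (\<bar>t\<bar> + 1) * cb) / n" using elim by (meson order.trans)
    qed
  qed
qed simp

lemma Phi1_deriv: "(Phi1 has_real_derivative Phi2 t) (at t)"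
  unfolding Phi1_def[abs_def] Phi2_def
proof (rule deriv_integral[where e=1 and g="\<lambda>\<omega>. ((aa \<omega> + 2 * (\<bar>t\<bar> + 1) * cb)\<^sup>2 + 2 * cb) / n"])
  show "integrable Om (\<lambda>\<omega>. d1 \<omega> s)" for s by (rule int_d1)
  show "(\<lambda>\<omega>. d2 \<omega> t) \<in> borel_measurable Om" by measurable
  show "AE \<omega> in Om. \<forall>s\<in>ball t 1. ((\<lambda>s. d1 \<omega> s) has_real_derivative d2 \<omega> s) (at s)"
    by (simp add: d1_deriv)
  show "integrable Om (\<lambda>\<omega>. ((aa \<omega> + 2 * (\<bar>t\<bar> + 1) * cb)\<^sup>2 + 2 * cb) / n)"
    using int_aa int_aa2 by (simp add: power2_sum)
  show "AE \<omega> in Om. \<forall>s\<in>ball t 1. \<bar>d2 \<omega> s\<bar> \<le> ((aa \<omega> + 2 * (\<bar>t\<bar> + 1) * cb)\<^sup>2 + 2 * cb) / n"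
    using d2_bound gib_AE
  proof eventually_elim
    case (elim \<omega>)
    interpret g: gibbs mu "A \<omega>" "B \<omega>" "R \<omega>" "aa \<omega>" cb "rR \<omega>" by (rule elim(2))
    show ?case
    proof
      fix s assume "s \<in> ball t 1"
      then have s: "\<bar>s\<bar> \<le> \<bar>t\<bar> + 1" by (auto simp: dist_real_def)
      have "2 * \<bar>s\<bar> * cb \<le> 2 * (\<bar>t\<bar> + 1) * cb" using s cb_nonneg by (simp add: mult_right_mono)
      moreover have "0 \<le> aa \<omega> + 2 * \<bar>s\<bar> * cb" using g.a_nonneg cb_nonneg by simp
      ultimately have "(aa \<omega> + 2 * \<bar>s\<bar> * cb)\<^sup>2 \<le> (aa \<omega> + 2 * (\<bar>t\<bar> + 1) * cb)\<^sup>2"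
        by (intro power_mono) auto
      then have "((aa \<omega> + 2 * \<bar>s\<bar> * cb)\<^sup>2 + 2 * cb) / n \<le> ((aa \<omega> + 2 * (\<bar>t\<bar> + 1) * cb)\<^sup>2 + 2 * cb) / n"
        using n by (simp add: divide_right_mono)
      then show "\<bar>d2 \<omega> s\<bar> \<le> ((aa \<omega> + 2 * (\<bar>t\<bar> + 1) * cb)\<^sup>2 + 2 * cb) / n"
        using elim(1) by (meson order.trans)
    qed
  qed
qed simp

definition "cc k \<omega> u = gavg mu (A \<omega>) (B \<omega>) (R \<omega>) u (phi k)"
definition "ee \<omega> u = gavg mu (A \<omega>) (B \<omega>) (R \<omega>) u (B \<omega>)"

lemma m_cc[measurable]: "(\<lambda>\<omega>. cc k \<omega> u) \<in> borel_measurable Om"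
proof -
  have "(\<lambda>p. phi k (snd p)) \<in> borel_measurable (Om \<Otimes>\<^sub>M mu)" by measurable
  from m_gavg[OF this] show ?thesis unfolding cc_def by simp
qed

lemma m_ee[measurable]: "(\<lambda>\<omega>. ee \<omega> u) \<in> borel_measurable Om"
  unfolding ee_def by (rule m_gavg[OF mB])

lemma cc_bound: "k \<in> J \<Longrightarrow> \<bar>cc k \<omega> u\<bar> \<le> cphi"
proof -
  assume k: "k \<in> J"
  obtain b r where "gibbs mu (A \<omega>) (B \<omega>) (R \<omega>) (aa \<omega>) b r" using gib_ex by blast
  then interpret g: gibbs mu "A \<omega>" "B \<omega>" "R \<omega>" "aa \<omega>" b r .
  show ?thesis unfolding cc_def by (rule g.avg_bound[OF mphi bphi[OF k]])
qed

lemma ee_bound: "AE \<omega> in Om. \<bar>ee \<omega> u\<bar> \<le> cb"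
  using gib_AE
proof eventually_elim
  case (elim \<omega>)
  interpret g: gibbs mu "A \<omega>" "B \<omega>" "R \<omega>" "aa \<omega>" cb "rR \<omega>" by (rule elim)
  show ?case unfolding ee_def by (rule g.avg_bound[OF g.mB g.bB])
qed

lemma d1_split: "d1 \<omega> u = ((\<Sum>k\<in>J. G k \<omega> * cc k \<omega> u) + 2 * u * ee \<omega> u) / n"
proof -
  obtain b r where "gibbs mu (A \<omega>) (B \<omega>) (R \<omega>) (aa \<omega>) b r" using gib_ex by blast
  then interpret g: gibbs mu "A \<omega>" "B \<omega>" "R \<omega>" "aa \<omega>" b r .
  have i: "integrable mu (\<lambda>x. phi k x * g.w u x)" if "k \<in> J" for k
    by (rule g.integrable_fw[OF mphi bphi[OF that]])
  have "(\<integral>x. A \<omega> x * g.w u x \<partial>mu) = (\<integral>x. (\<Sum>k\<in>J. G k \<omega> * (phi k x * g.w u x)) \<partial>mu)"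
    unfolding A_def by (simp add: sum_distrib_right mult.assoc)
  also have "\<dots> = (\<Sum>k\<in>J. G k \<omega> * (\<integral>x. phi k x * g.w u x \<partial>mu))"
    using i by (simp add: Bochner_Integration.integral_sum)
  finally have "g.avg u (A \<omega>) = (\<Sum>k\<in>J. G k \<omega> * cc k \<omega> u)"
    unfolding gavg_def cc_def by (simp add: sum_divide_distrib)
  then show ?thesis unfolding d1_def gL1_def ee_def by simp
qed

lemma int_Gcc: "k \<in> J \<Longrightarrow> integrable Om (\<lambda>\<omega>. G k \<omega> * cc k \<omega> u)"
proof -
  assume k: "k \<in> J"
  show ?thesis
  proof (rule Bochner_Integration.integrable_bound[where f="\<lambda>\<omega>. cphi * G k \<omega>"])
    show "integrable Om (\<lambda>\<omega>. cphi * G k \<omega>)" using int_G[OF k] by simp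
    show "(\<lambda>\<omega>. G k \<omega> * cc k \<omega> u) \<in> borel_measurable Om" by measurable
    show "AE \<omega> in Om. norm (G k \<omega> * cc k \<omega> u) \<le> norm (cphi * G k \<omega>)"
    proof (rule AE_I2)
      fix \<omega>
      have "\<bar>cc k \<omega> u\<bar> \<le> \<bar>cphi\<bar>" using cc_bound[OF k, of \<omega> u] by linarith
      then show "norm (G k \<omega> * cc k \<omega> u) \<le> norm (cphi * G k \<omega>)"
        by (simp add: abs_mult mult.commute[of "\<bar>cphi\<bar>"] mult_left_mono)
    qed
  qed
qed

lemma int_ee: "integrable Om (\<lambda>\<omega>. ee \<omega> u)"
  by (rule Bochner_Integration.integrable_bound[where f="\<lambda>_. cb"])
     (use ee_bound[of u] in \<open>auto elim!: eventually_mono\<close>)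

lemma lip_cc:
  assumes k: "k \<in> J"
  shows "\<bar>cc k (upd k \<omega> w) u - cc k (upd k \<omega> w') u\<bar> \<le> cphi\<^sup>2 * \<bar>u\<bar> * \<bar>w - w'\<bar>"
proof -
  define Q where "Q x = u * (\<Sum>l\<in>J-{k}. G l \<omega> * phi l x) + u\<^sup>2 * B \<omega> x + R \<omega> x" for x
  have eqA: "A (upd k \<omega> v) x = v * phi k x + (\<Sum>l\<in>J-{k}. G l \<omega> * phi l x)" for v x
  proof -
    have "A (upd k \<omega> v) x = G k (upd k \<omega> v) * phi k x + (\<Sum>l\<in>J-{k}. G l (upd k \<omega> v) * phi l x)"
      unfolding A_def using J k by (simp add: sum.remove)
    also have "(\<Sum>l\<in>J-{k}. G l (upd k \<omega> v) * phi l x) = (\<Sum>l\<in>J-{k}. G l \<omega> * phi l x)"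
      by (rule sum.cong) (auto simp: updG'[OF k])
    finally show ?thesis using updG[OF k] by simp
  qed
  have eqc: "cc k (upd k \<omega> v) u = gavg mu (phi k) (\<lambda>_. 0) Q (u * v) (phi k)" for v
  proof -
    have "gw (A (upd k \<omega> v)) (B (upd k \<omega> v)) (R (upd k \<omega> v)) u = gw (phi k) (\<lambda>_. 0) Q (u * v)"
      unfolding gw_def Q_def fun_eq_iff eqA updB[OF k] updR[OF k]
      by (simp add: algebra_simps)
    then show ?thesis unfolding cc_def gavg_def gZ_def by simp
  qed
  obtain b where b: "AE x in mu. \<bar>B \<omega> x\<bar> \<le> b" using bB_all by blast
  obtain r where r: "AE x in mu. \<bar>R \<omega> x\<bar> \<le> r" using bR_all by blast
  have bQ: "AE x in mu. \<bar>Q x\<bar> \<le> \<bar>u\<bar> * aa \<omega> + u\<^sup>2 * \<bar>b\<bar> + \<bar>r\<bar>"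
  proof -
    have "AE x in mu. \<forall>l\<in>J. \<bar>phi l x\<bar> \<le> cphi"
      using J bphi by (simp add: eventually_ball_finite)
    then show ?thesis using b r
    proof eventually_elim
      case (elim x)
      have "\<bar>\<Sum>l\<in>J-{k}. G l \<omega> * phi l x\<bar> \<le> (\<Sum>l\<in>J-{k}. \<bar>G l \<omega> * phi l x\<bar>)" by (rule sum_abs)
      also have "\<dots> \<le> (\<Sum>l\<in>J-{k}. \<bar>G l \<omega>\<bar> * cphi)"
        by (rule sum_mono) (use elim(1) in \<open>auto simp: abs_mult intro: mult_left_mono\<close>)
      also have "\<dots> \<le> (\<Sum>l\<in>J. \<bar>G l \<omega>\<bar> * cphi)"
      proof (cases "J = {}")
        case False
        then have "0 \<le> cphi" by (rule cphi_nonneg)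
        then show ?thesis using J by (intro sum_mono2) auto
      qed simp
      also have "\<dots> = aa \<omega>" unfolding aa_def by (simp add: sum_distrib_right)
      finally have s1: "\<bar>\<Sum>l\<in>J-{k}. G l \<omega> * phi l x\<bar> \<le> aa \<omega>" .
      have t1: "\<bar>u * (\<Sum>l\<in>J-{k}. G l \<omega> * phi l x)\<bar> \<le> \<bar>u\<bar> * aa \<omega>"
        unfolding abs_mult by (rule mult_left_mono[OF s1]) simp
      have t2: "\<bar>u\<^sup>2 * B \<omega> x\<bar> \<le> u\<^sup>2 * \<bar>b\<bar>"
        unfolding abs_mult using elim(2) by (simp add: mult_left_mono)
      have t3: "\<bar>R \<omega> x\<bar> \<le> \<bar>r\<bar>" using elim(3) by linarith
      show ?case unfolding Q_def using t1 t2 t3 by linarith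
    qed
  qed
  have mQ: "Q \<in> borel_measurable mu" unfolding Q_def using mBx mRx by measurable
  interpret g: gibbs mu "phi k" "\<lambda>_. 0" Q cphi 0 "\<bar>u\<bar> * aa \<omega> + u\<^sup>2 * \<bar>b\<bar> + \<bar>r\<bar>"
    unfolding gibbs_def gibbs_axioms_def using mu mphi mQ bphi[OF k] bQ by simp
  have "\<bar>g.avg (u * w) (phi k) - g.avg (u * w') (phi k)\<bar> \<le> cphi\<^sup>2 * \<bar>u * w - u * w'\<bar>"
    by (rule g.avg_lip) simp
  also have "\<bar>u * w - u * w'\<bar> = \<bar>u\<bar> * \<bar>w - w'\<bar>" by (simp add: abs_mult[symmetric] right_diff_distrib)
  finally show ?thesis unfolding eqc by (simp add: mult.assoc)
qed

lemma Gcc_bound: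
  assumes k: "k \<in> J"
  shows "\<bar>\<integral>\<omega>. G k \<omega> * cc k \<omega> u \<partial>Om\<bar> \<le> cphi\<^sup>2 * \<bar>u\<bar>"
proof -
  have "(\<integral>\<omega>. G k \<omega> * cc k \<omega> u \<partial>Om) = (\<integral>\<omega>. \<integral>w. G k (upd k \<omega> w) * cc k (upd k \<omega> w) u \<partial>gauss \<partial>Om)"
    by (rule resamp_integral(1)[OF prob_space_imp_sigma_finite[OF Om] gauss_sf rs[OF k] int_Gcc[OF k]])
  also have "\<dots> = (\<integral>\<omega>. \<integral>w. w * cc k (upd k \<omega> w) u \<partial>gauss \<partial>Om)"
    using updG[OF k] by simp
  finally have eq: "(\<integral>\<omega>. G k \<omega> * cc k \<omega> u \<partial>Om) = (\<integral>\<omega>. \<integral>w. w * cc k (upd k \<omega> w) u \<partial>gauss \<partial>Om)" .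
  have "\<bar>\<integral>\<omega>. \<integral>w. w * cc k (upd k \<omega> w) u \<partial>gauss \<partial>Om\<bar> \<le> cphi\<^sup>2 * \<bar>u\<bar>"
  proof (rule AE_abs_integral_bound[OF Om], rule AE_I2)
    fix \<omega>
    define g where "g w = cc k (upd k \<omega> w) u" for w
    have lip: "\<bar>g w - g w'\<bar> \<le> cphi\<^sup>2 * \<bar>u\<bar> * \<bar>w - w'\<bar>" for w w'
      unfolding g_def by (rule lip_cc[OF k])
    have "(cphi\<^sup>2 * \<bar>u\<bar>)-lipschitz_on UNIV g"
      unfolding lipschitz_on_def dist_real_def using lip by simp
    then have "continuous_on UNIV g" by (rule lipschitz_on_continuous_on)
    then have gm: "g \<in> borel_measurable borel" by (rule borel_measurable_continuous_onI)
    have "\<bar>\<integral>w. w * g w \<partial>gauss\<bar> \<le> cphi\<^sup>2 * \<bar>u\<bar>"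
    proof (rule stein_bound[OF gm])
      show "\<bar>g w\<bar> \<le> cphi" for w unfolding g_def by (rule cc_bound[OF k])
      show "\<bar>g w - g 0\<bar> \<le> cphi\<^sup>2 * \<bar>u\<bar> * \<bar>w\<bar>" for w using lip[of w 0] by simp
    qed
    then show "\<bar>\<integral>w. w * cc k (upd k \<omega> w) u \<partial>gauss\<bar> \<le> cphi\<^sup>2 * \<bar>u\<bar>" unfolding g_def .
  qed
  then show ?thesis unfolding eq .
qed

lemma Phi1_bound: "\<bar>Phi1 u\<bar> \<le> (real (card J) * cphi\<^sup>2 + 2 * cb) / n * \<bar>u\<bar>"
proof -
  have "Phi1 u = (\<integral>\<omega>. ((\<Sum>k\<in>J. G k \<omega> * cc k \<omega> u) + 2 * u * ee \<omega> u) / n \<partial>Om)"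
    unfolding Phi1_def d1_split ..
  also have "\<dots> = ((\<Sum>k\<in>J. \<integral>\<omega>. G k \<omega> * cc k \<omega> u \<partial>Om) + 2 * u * (\<integral>\<omega>. ee \<omega> u \<partial>Om)) / n"
  proof -
    have i1: "integrable Om (\<lambda>\<omega>. \<Sum>k\<in>J. G k \<omega> * cc k \<omega> u)"
      using int_Gcc by (auto intro!: Bochner_Integration.integrable_sum)
    have i2: "integrable Om (\<lambda>\<omega>. 2 * u * ee \<omega> u)" using int_ee by simp
    have "(\<integral>\<omega>. ((\<Sum>k\<in>J. G k \<omega> * cc k \<omega> u) + 2 * u * ee \<omega> u) / n \<partial>Om) =
        (\<integral>\<omega>. (\<Sum>k\<in>J. G k \<omega> * cc k \<omega> u) + 2 * u * ee \<omega> u \<partial>Om) / n" by simp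
    also have "(\<integral>\<omega>. (\<Sum>k\<in>J. G k \<omega> * cc k \<omega> u) + 2 * u * ee \<omega> u \<partial>Om) =
        (\<integral>\<omega>. (\<Sum>k\<in>J. G k \<omega> * cc k \<omega> u) \<partial>Om) + (\<integral>\<omega>. 2 * u * ee \<omega> u \<partial>Om)"
      using i1 i2 by (rule Bochner_Integration.integral_add)
    also have "(\<integral>\<omega>. (\<Sum>k\<in>J. G k \<omega> * cc k \<omega> u) \<partial>Om) = (\<Sum>k\<in>J. \<integral>\<omega>. G k \<omega> * cc k \<omega> u \<partial>Om)"
      using int_Gcc by (simp add: Bochner_Integration.integral_sum)
    finally show ?thesis by simp
  qed
  finally have eq: "Phi1 u = ((\<Sum>k\<in>J. \<integral>\<omega>. G k \<omega> * cc k \<omega> u \<partial>Om) + 2 * u * (\<integral>\<omega>. ee \<omega> u \<partial>Om)) / n" .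
  have s1: "\<bar>\<Sum>k\<in>J. \<integral>\<omega>. G k \<omega> * cc k \<omega> u \<partial>Om\<bar> \<le> real (card J) * (cphi\<^sup>2 * \<bar>u\<bar>)"
  proof -
    have "\<bar>\<Sum>k\<in>J. \<integral>\<omega>. G k \<omega> * cc k \<omega> u \<partial>Om\<bar> \<le> (\<Sum>k\<in>J. \<bar>\<integral>\<omega>. G k \<omega> * cc k \<omega> u \<partial>Om\<bar>)" by (rule sum_abs)
    also have "\<dots> \<le> (\<Sum>k\<in>J. cphi\<^sup>2 * \<bar>u\<bar>)" by (rule sum_mono) (rule Gcc_bound)
    finally show ?thesis by simp
  qed
  have s2: "\<bar>2 * u * (\<integral>\<omega>. ee \<omega> u \<partial>Om)\<bar> \<le> 2 * \<bar>u\<bar> * cb"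
  proof -
    have "\<bar>\<integral>\<omega>. ee \<omega> u \<partial>Om\<bar> \<le> cb" by (rule AE_abs_integral_bound[OF Om ee_bound])
    then show ?thesis by (simp add: abs_mult mult_left_mono)
  qed
  have "\<bar>Phi1 u\<bar> \<le> (real (card J) * (cphi\<^sup>2 * \<bar>u\<bar>) + 2 * \<bar>u\<bar> * cb) / n"
    unfolding eq using n s1 s2 by (simp add: abs_divide divide_right_mono)
  also have "\<dots> = (real (card J) * cphi\<^sup>2 + 2 * cb) / n * \<bar>u\<bar>" by (simp add: algebra_simps)
  finally show ?thesis .
qed

end

context ogibbs begin
lemma ev_pos: "eventually (\<lambda>x::real. 0 < x) (at_right 0)"
  by (simp add: eventually_at_filter)

lemma Phi1_0: "Phi1 0 = 0"
  using Phi1_bound[of 0] by simp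

lemma Phi2_lim: "((\<lambda>u. Phi1 u / u) \<longlongrightarrow> Phi2 0) (at_right 0)"
proof -
  have "((\<lambda>u. (Phi1 u - Phi1 0) / (u - 0)) \<longlongrightarrow> Phi2 0) (at 0)"
    using Phi1_deriv[of 0] by (simp add: has_field_derivative_iff)
  then have "((\<lambda>u. Phi1 u / u) \<longlongrightarrow> Phi2 0) (at 0)" using Phi1_0 by simp
  then show ?thesis by (rule filterlim_mono) (simp_all add: at_le)
qed

lemma Phi2_bound: "\<bar>Phi2 0\<bar> \<le> (real (card J) * cphi\<^sup>2 + 2 * cb) / n"
proof -
  have "((\<lambda>u. \<bar>Phi1 u / u\<bar>) \<longlongrightarrow> \<bar>Phi2 0\<bar>) (at_right 0)" by (rule tendsto_rabs[OF Phi2_lim])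
  moreover have "eventually (\<lambda>u. \<bar>Phi1 u / u\<bar> \<le> (real (card J) * cphi\<^sup>2 + 2 * cb) / n) (at_right 0)"
    using ev_pos
  proof eventually_elim
    case (elim u)
    then show ?case using Phi1_bound[of u] by (simp add: abs_divide divide_le_eq)
  qed
  ultimately show ?thesis
    by (rule tendsto_upperbound) simp
qed

lemma Fbar_deriv:
  assumes t: "0 \<le> t"
  shows "\<exists>D. ((\<lambda>s. Phi (sqrt s)) has_real_derivative D) (at t within {0..}) \<and>
             \<bar>D\<bar> \<le> (real (card J) * cphi\<^sup>2 + 2 * cb) / n / 2"
proof (cases "t = 0")
  case False
  then have tp: "0 < t" using t by simp
  have d: "((\<lambda>s. Phi (sqrt s)) has_real_derivative Phi1 (sqrt t) * (inverse (sqrt t) / 2)) (at t)"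
    by (rule DERIV_chain2[OF Phi_deriv DERIV_real_sqrt[OF tp]])
  have st: "0 < sqrt t" using tp by simp
  have "\<bar>Phi1 (sqrt t) * (inverse (sqrt t) / 2)\<bar> = \<bar>Phi1 (sqrt t)\<bar> / (2 * sqrt t)"
    using st by (simp add: abs_mult inverse_eq_divide)
  also have "\<dots> \<le> ((real (card J) * cphi\<^sup>2 + 2 * cb) / n * sqrt t) / (2 * sqrt t)"
    using Phi1_bound[of "sqrt t"] st by (intro divide_right_mono) simp_all
  also have "\<dots> = (real (card J) * cphi\<^sup>2 + 2 * cb) / n / 2" using st by simp
  finally have b: "\<bar>Phi1 (sqrt t) * (inverse (sqrt t) / 2)\<bar> \<le> (real (card J) * cphi\<^sup>2 + 2 * cb) / n / 2" .
  show ?thesis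
    by (rule exI[of _ "Phi1 (sqrt t) * (inverse (sqrt t) / 2)"], rule conjI[OF has_field_derivative_at_within[OF d] b])
next
  case True
  have lh: "((\<lambda>u. (Phi u - Phi 0) / u\<^sup>2) \<longlongrightarrow> Phi2 0 / 2) (at_right 0)"
  proof (rule lhopital_right_0[where f'=Phi1 and g'="\<lambda>u. 2 * u"])
    have "isCont Phi 0" by (rule DERIV_isCont[OF Phi_deriv])
    then have "(Phi \<longlongrightarrow> Phi 0) (at_right 0)"
      by (simp add: isCont_def filterlim_mono at_le)
    then show "((\<lambda>u. Phi u - Phi 0) \<longlongrightarrow> 0) (at_right 0)"
      using tendsto_diff[of Phi "Phi 0" "at_right 0" "\<lambda>_. Phi 0" "Phi 0"] by simp
    show "((\<lambda>u::real. u\<^sup>2) \<longlongrightarrow> 0) (at_right 0)"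
      using tendsto_power[OF tendsto_ident_at[of 0 "{0<..}"], of 2] by simp
    show "eventually (\<lambda>u::real. u\<^sup>2 \<noteq> 0) (at_right 0)" using ev_pos by eventually_elim simp
    show "eventually (\<lambda>u::real. 2 * u \<noteq> 0) (at_right 0)" using ev_pos by eventually_elim simp
    show "eventually (\<lambda>u. ((\<lambda>u. Phi u - Phi 0) has_real_derivative Phi1 u) (at u)) (at_right 0)"
    proof (rule always_eventually, intro allI)
      fix u
      show "((\<lambda>u. Phi u - Phi 0) has_real_derivative Phi1 u) (at u)"
        using DERIV_diff[OF Phi_deriv[of u] DERIV_const[of "Phi 0"]] by simp
    qed
    show "eventually (\<lambda>u. ((\<lambda>u::real. u\<^sup>2) has_real_derivative 2 * u) (at u)) (at_right 0)"
    proof (rule always_eventually, intro allI)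
      fix u :: real
      show "((\<lambda>u::real. u\<^sup>2) has_real_derivative 2 * u) (at u)"
        using DERIV_pow[of 2 u] by simp
    qed
    have "((\<lambda>u. Phi1 u / u / 2) \<longlongrightarrow> Phi2 0 / 2) (at_right 0)"
      using tendsto_divide[OF Phi2_lim tendsto_const[of 2]] by simp
    then show "((\<lambda>u. Phi1 u / (2 * u)) \<longlongrightarrow> Phi2 0 / 2) (at_right 0)"
      by (simp add: mult.commute)
  qed
  have sq: "filterlim sqrt (at_right 0) (at_right (0::real))"
  proof -
    have "(sqrt \<longlongrightarrow> sqrt 0) (at_right (0::real))"
      by (rule tendsto_real_sqrt[OF tendsto_ident_at])
    moreover have "eventually (\<lambda>x. sqrt x \<in> {0::real<..} \<and> sqrt x \<noteq> 0) (at_right 0)"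
      using ev_pos by eventually_elim simp
    ultimately show ?thesis unfolding filterlim_at by simp
  qed
  have "((\<lambda>y. (Phi (sqrt y) - Phi 0) / (sqrt y)\<^sup>2) \<longlongrightarrow> Phi2 0 / 2) (at_right 0)"
    using filterlim_compose[OF lh sq] by simp
  then have "((\<lambda>y. (Phi (sqrt y) - Phi (sqrt 0)) / (y - 0)) \<longlongrightarrow> Phi2 0 / 2) (at_right 0)"
  proof (rule filterlim_cong[THEN iffD1, rotated 3])
    show "eventually (\<lambda>y. (Phi (sqrt y) - Phi 0) / (sqrt y)\<^sup>2 = (Phi (sqrt y) - Phi (sqrt 0)) / (y - 0)) (at_right 0)"
      using ev_pos by eventually_elim simp
  qed simp_all
  then have "((\<lambda>s. Phi (sqrt s)) has_real_derivative Phi2 0 / 2) (at 0 within {0..})"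
    by (simp add: has_field_derivative_iff at_within_Ici_at_right)
  moreover have "\<bar>Phi2 0 / 2\<bar> \<le> (real (card J) * cphi\<^sup>2 + 2 * cb) / n / 2"
  proof -
    have "\<bar>Phi2 0 / 2\<bar> = \<bar>Phi2 0\<bar> / 2" by simp
    also have "\<dots> \<le> (real (card J) * cphi\<^sup>2 + 2 * cb) / n / 2"
      by (rule divide_right_mono[OF Phi2_bound]) simp
    finally show ?thesis .
  qed
  ultimately show ?thesis using True by blast
qed

end

lemma norm_N_L2: "norm_N N x = L2_set x {..<N}"
  unfolding norm_N_def inner_N_def L2_set_def by (simp add: power2_eq_square)

lemma norm_N_nonneg: "0 \<le> norm_N N x"
  unfolding norm_N_L2 by (rule L2_set_nonneg)

lemma inner_N_self: "inner_N N x x = (norm_N N x)\<^sup>2"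
  unfolding norm_N_def inner_N_def by (simp add: sum_nonneg)

lemma inner_N_comm: "inner_N N x y = inner_N N y x"
  unfolding inner_N_def by (simp add: mult.commute)

lemma inner_N_CS: "\<bar>inner_N N x y\<bar> \<le> norm_N N x * norm_N N y"
proof -
  have "\<bar>inner_N N x y\<bar> \<le> (\<Sum>i<N. \<bar>x i\<bar> * \<bar>y i\<bar>)"
    unfolding inner_N_def by (metis (no_types, lifting) abs_mult sum.cong sum_abs)
  also have "\<dots> \<le> norm_N N x * norm_N N y" unfolding norm_N_L2 by (rule L2_set_mult_ineq)
  finally show ?thesis .
qed

lemma comp_le_norm_N: "j < N \<Longrightarrow> \<bar>x j\<bar> \<le> norm_N N x"
proof -
  assume j: "j < N"
  have "\<bar>x j\<bar> \<le> L2_set (\<lambda>i. \<bar>x i\<bar>) {..<N}" by (rule member_le_L2_set) (use j in auto)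
  also have "L2_set (\<lambda>i. \<bar>x i\<bar>) {..<N} = L2_set x {..<N}" by (simp add: L2_set_def)
  finally show ?thesis unfolding norm_N_L2 .
qed

lemma norm_N_le_sum: "norm_N N x \<le> (\<Sum>i<N. \<bar>x i\<bar>)"
  unfolding norm_N_L2 by (rule L2_set_le_sum_abs)

lemma norm_N_bound:
  assumes "\<forall>i<N. \<bar>x i\<bar> \<le> K"
  shows "(norm_N N x)\<^sup>2 \<le> real N * K\<^sup>2"
proof -
  have "(norm_N N x)\<^sup>2 = (\<Sum>i<N. (x i)\<^sup>2)" unfolding inner_N_self[symmetric] inner_N_def by (simp add: power2_eq_square)
  also have "\<dots> \<le> (\<Sum>i<N. K\<^sup>2)"
    by (rule sum_mono) (use assms in \<open>auto intro: sq_le_of_abs\<close>)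
  finally show ?thesis by simp
qed

lemma norm_N_bound':
  assumes "\<forall>i<N. \<bar>x i\<bar> \<le> K"
  shows "norm_N N x \<le> sqrt (real N) * K"
proof -
  have K: "0 \<le> K \<or> N = 0" using assms by (metis abs_ge_zero order.trans neq0_conv)
  show ?thesis
  proof (cases "N = 0")
    case True then show ?thesis by (simp add: norm_N_def inner_N_def)
  next
    case False
    then have K0: "0 \<le> K" using K by simp
    have "norm_N N x = sqrt ((norm_N N x)\<^sup>2)" using norm_N_nonneg by simp
    also have "\<dots> \<le> sqrt (real N * K\<^sup>2)" by (rule real_sqrt_le_mono[OF norm_N_bound[OF assms]])
    also have "\<dots> = sqrt (real N) * K" using K0 by (simp add: real_sqrt_mult)
    finally show ?thesis .
  qed
qed

lemma matvec_bound: "norm_N N (matvec_N N W x) \<le> (\<Sum>i<N. \<Sum>j<N. \<bar>W i j\<bar>) * norm_N N x"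
proof -
  have "norm_N N (matvec_N N W x) \<le> (\<Sum>i<N. \<bar>matvec_N N W x i\<bar>)" by (rule norm_N_le_sum)
  also have "\<dots> \<le> (\<Sum>i<N. (\<Sum>j<N. \<bar>W i j\<bar>) * norm_N N x)"
  proof (rule sum_mono)
    fix i assume "i \<in> {..<N}"
    have "\<bar>matvec_N N W x i\<bar> \<le> (\<Sum>j<N. \<bar>W i j * x j\<bar>)" unfolding matvec_N_def by (rule sum_abs)
    also have "\<dots> \<le> (\<Sum>j<N. \<bar>W i j\<bar> * norm_N N x)"
      by (rule sum_mono) (auto simp: abs_mult intro: mult_left_mono comp_le_norm_N)
    finally show "\<bar>matvec_N N W x i\<bar> \<le> (\<Sum>j<N. \<bar>W i j\<bar>) * norm_N N x" by (simp add: sum_distrib_right)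
  qed
  finally show ?thesis by (simp add: sum_distrib_right)
qed

lemma opnorm_bdd: "bdd_above {norm_N N (matvec_N N W x) | x. norm_N N x \<le> 1}"
proof (rule bdd_aboveI)
  fix y assume "y \<in> {norm_N N (matvec_N N W x) | x. norm_N N x \<le> 1}"
  then obtain x where x: "y = norm_N N (matvec_N N W x)" "norm_N N x \<le> 1" by blast
  have "y \<le> (\<Sum>i<N. \<Sum>j<N. \<bar>W i j\<bar>) * norm_N N x" using x matvec_bound by simp
  also have "\<dots> \<le> (\<Sum>i<N. \<Sum>j<N. \<bar>W i j\<bar>) * 1" by (rule mult_left_mono) (use x in \<open>auto intro: sum_nonneg\<close>)
  finally show "y \<le> (\<Sum>i<N. \<Sum>j<N. \<bar>W i j\<bar>)" by simp
qed

lemma opnorm_nonneg: "0 \<le> opnorm_N N W"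
proof -
  have "norm_N N (matvec_N N W (\<lambda>_. 0)) \<le> opnorm_N N W"
    unfolding opnorm_N_def by (rule cSup_upper[OF _ opnorm_bdd]) (auto simp: norm_N_def inner_N_def)
  moreover have "norm_N N (matvec_N N W (\<lambda>_. 0)) = 0" by (simp add: norm_N_def inner_N_def matvec_N_def)
  ultimately show ?thesis by simp
qed

lemma matvec_scale: "matvec_N N W (\<lambda>i. c * x i) = (\<lambda>i. c * matvec_N N W x i)"
  unfolding matvec_N_def by (simp add: sum_distrib_left mult.left_commute)

lemma norm_N_scale: "norm_N N (\<lambda>i. c * x i) = \<bar>c\<bar> * norm_N N x"
proof -
  have "inner_N N (\<lambda>i. c * x i) (\<lambda>i. c * x i) = c\<^sup>2 * inner_N N x x"
    unfolding inner_N_def by (simp add: sum_distrib_left power2_eq_square algebra_simps)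
  then show ?thesis unfolding norm_N_def by (simp add: real_sqrt_mult)
qed

lemma opnorm_le: "norm_N N (matvec_N N W x) \<le> opnorm_N N W * norm_N N x"
proof (cases "norm_N N x = 0")
  case True
  then have "norm_N N (matvec_N N W x) \<le> 0" using matvec_bound[of N W x] by simp
  then show ?thesis using True by simp
next
  case False
  then have nx: "0 < norm_N N x" using norm_N_nonneg[of N x] by simp
  define y where "y i = (1 / norm_N N x) * x i" for i
  have ny: "norm_N N y = 1" unfolding y_def norm_N_scale using nx by simp
  have "norm_N N (matvec_N N W y) \<le> opnorm_N N W"
    unfolding opnorm_N_def by (rule cSup_upper[OF _ opnorm_bdd]) (use ny in auto)
  moreover have "norm_N N (matvec_N N W y) = norm_N N (matvec_N N W x) / norm_N N x"
    unfolding y_def matvec_scale norm_N_scale using nx by simp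
  ultimately show ?thesis using nx by (simp add: divide_le_eq mult.commute)
qed

lemma quad_bound: "\<bar>inner_N N x (matvec_N N W x)\<bar> \<le> opnorm_N N W * (norm_N N x)\<^sup>2"
proof -
  have "\<bar>inner_N N x (matvec_N N W x)\<bar> \<le> norm_N N x * norm_N N (matvec_N N W x)" by (rule inner_N_CS)
  also have "\<dots> \<le> norm_N N x * (opnorm_N N W * norm_N N x)"
    by (rule mult_left_mono[OF opnorm_le norm_N_nonneg])
  finally show ?thesis by (simp add: power2_eq_square mult.commute mult.left_commute)
qed

lemma quad_sum: "inner_N N x (matvec_N N W x) = (\<Sum>p\<in>{..<N} \<times> {..<N}. W (fst p) (snd p) * (x (fst p) * x (snd p)))"
proof -
  have "inner_N N x (matvec_N N W x) = (\<Sum>i<N. \<Sum>j<N. W i j * (x i * x j))"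
    unfolding inner_N_def matvec_N_def by (simp add: sum_distrib_left algebra_simps)
  also have "\<dots> = (\<Sum>(i,j)\<in>{..<N} \<times> {..<N}. W i j * (x i * x j))" by (rule sum.cartesian_product)
  also have "\<dots> = (\<Sum>p\<in>{..<N} \<times> {..<N}. W (fst p) (snd p) * (x (fst p) * x (snd p)))"
    by (simp add: split_beta)
  finally show ?thesis .
qed

lemma resamp_coord_int:
  fixes g :: "'a \<Rightarrow> real"
  assumes Om: "prob_space Om" and r: "resamp Om gauss u" and g[measurable]: "g \<in> borel_measurable Om"
    and gu: "\<And>\<omega> w. g (u \<omega> w) = w"
  shows "integrable Om (\<lambda>\<omega>. (g \<omega>)\<^sup>2)" "integrable Om g"
proof -
  interpret Omp: prob_space Om by (rule Om)
  show i2: "integrable Om (\<lambda>\<omega>. (g \<omega>)\<^sup>2)"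
  proof (rule integrableI_bounded)
    show "(\<lambda>\<omega>. (g \<omega>)\<^sup>2) \<in> borel_measurable Om" by measurable
    have mf: "(\<lambda>\<omega>. ennreal (norm ((g \<omega>)\<^sup>2))) \<in> borel_measurable Om" by measurable
    have "(\<integral>\<^sup>+\<omega>. ennreal (norm ((g \<omega>)\<^sup>2)) \<partial>Om) =
        (\<integral>\<^sup>+\<omega>. \<integral>\<^sup>+w. ennreal (norm ((g (u \<omega> w))\<^sup>2)) \<partial>gauss \<partial>Om)"
      using r mf unfolding resamp_def by blast
    also have "\<dots> = (\<integral>\<^sup>+\<omega>. \<integral>\<^sup>+w. ennreal (w\<^sup>2) \<partial>gauss \<partial>Om)"
      using gu by simp
    also have "\<dots> = (\<integral>\<^sup>+\<omega>. ennreal 1 \<partial>Om)"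
    proof -
      have "(\<integral>\<^sup>+w. ennreal (w\<^sup>2) \<partial>gauss) = ennreal (\<integral>w. w\<^sup>2 \<partial>gauss)"
        by (rule nn_integral_eq_integral[OF gauss_int_x2(1)]) simp
      then show ?thesis using gauss_int_x2(2) by simp
    qed
    also have "\<dots> = 1" by (simp add: Omp.emeasure_space_1)
    finally show "(\<integral>\<^sup>+\<omega>. ennreal (norm ((g \<omega>)\<^sup>2)) \<partial>Om) < \<infinity>" by simp
  qed
  show "integrable Om g"
  proof (rule Bochner_Integration.integrable_bound[where f="\<lambda>\<omega>. 1 + (g \<omega>)\<^sup>2"])
    show "integrable Om (\<lambda>\<omega>. 1 + (g \<omega>)\<^sup>2)" using i2 by simp
    show "g \<in> borel_measurable Om" by measurable
    show "AE \<omega> in Om. norm (g \<omega>) \<le> norm (1 + (g \<omega>)\<^sup>2)"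
    proof (rule AE_I2)
      fix \<omega>
      have "\<bar>g \<omega>\<bar> \<le> 1 + (g \<omega>)\<^sup>2"
      proof (cases "\<bar>g \<omega>\<bar> \<le> 1")
        case True then show ?thesis using zero_le_power2[of "g \<omega>"] by linarith
      next
        case False
        then have "\<bar>g \<omega>\<bar> * 1 \<le> \<bar>g \<omega>\<bar> * \<bar>g \<omega>\<bar>" by (intro mult_left_mono) auto
        then show ?thesis by (simp add: power2_eq_square)
      qed
      then show "norm (g \<omega>) \<le> norm (1 + (g \<omega>)\<^sup>2)" by simp
    qed
  qed
qed

lemma PiM_comp_meas:
  fixes Q :: "real measure"
  assumes "sets Q = sets borel"
  shows "(\<lambda>x. x i) \<in> borel_measurable (PiM I (\<lambda>_. Q))"
proof (cases "i \<in> I")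
  case True
  have "(\<lambda>x. x i) \<in> measurable (PiM I (\<lambda>_. Q)) Q" by (rule measurable_component_singleton[OF True])
  then show ?thesis by (simp add: measurable_cong_sets[OF refl assms])
next
  case False
  have "(\<lambda>x. x i) \<in> borel_measurable (PiM I (\<lambda>_. Q)) \<longleftrightarrow> (\<lambda>x. undefined :: real) \<in> borel_measurable (PiM I (\<lambda>_. Q))"
    by (intro Sigma_Algebra.measurable_cong) (use False in \<open>auto simp: space_PiM PiE_def extensional_def\<close>)
  then show ?thesis by simp
qed

lemma PiM_comp_meas2:
  fixes Q :: "real measure"
  assumes "sets Q = sets borel"
  shows "(\<lambda>x. x i j) \<in> borel_measurable (PiM I (\<lambda>_. PiM I (\<lambda>_. Q)))"
proof (cases "i \<in> I")
  case True
  have "(\<lambda>x. x i) \<in> measurable (PiM I (\<lambda>_. PiM I (\<lambda>_. Q))) (PiM I (\<lambda>_. Q))"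
    by (rule measurable_component_singleton[OF True])
  from measurable_comp[OF this PiM_comp_meas[OF assms, of j I]] show ?thesis by (simp add: comp_def)
next
  case False
  have "(\<lambda>x. x i j) \<in> borel_measurable (PiM I (\<lambda>_. PiM I (\<lambda>_. Q))) \<longleftrightarrow> (\<lambda>x. undefined j :: real) \<in> borel_measurable (PiM I (\<lambda>_. PiM I (\<lambda>_. Q)))"
    by (intro Sigma_Algebra.measurable_cong) (use False in \<open>auto simp: space_PiM PiE_def extensional_def\<close>)
  then show ?thesis by simp
qed

locale conc =
  fixes P :: "real measure" and N :: nat and K :: real
  assumes P: "prob_space P" and sP: "sets P = sets borel"
    and KP: "AE x in P. \<bar>x\<bar> \<le> K" and N: "1 \<le> N"
begin

abbreviation "PN \<equiv> P_N P N"
abbreviation "WW \<equiv> PiM {..<N} (\<lambda>_. PiM {..<N} (\<lambda>_. gauss))"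
abbreviation "ZZ \<equiv> PiM {..<N} (\<lambda>_. gauss)"
abbreviation "Om \<equiv> Omega P N"

lemma K_nonneg: "0 \<le> K"
proof (rule ccontr)
  assume nc: "\<not> 0 \<le> K"
  have "AE x in P. False" by (rule eventually_mono[OF KP]) (use nc in auto)
  then show False using prob_space.AE_False[OF P] by simp
qed

lemma Np: "0 < real N" using N by simp

lemma prob_ZZ: "prob_space ZZ" by (rule prob_space_PiM) (rule gauss_prob)
lemma prob_WW: "prob_space WW" by (rule prob_space_PiM) (rule prob_ZZ)
lemma prob_PN: "prob_space PN" unfolding P_N_def by (rule prob_space_PiM) (rule P)
lemma prob_Om: "prob_space Om"
  unfolding Omega_def by (intro prob_space_pair prob_PN prob_WW prob_ZZ)

lemma sf_ZZ: "sigma_finite_measure ZZ" by (rule prob_space_imp_sigma_finite[OF prob_ZZ])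
lemma sf_WW: "sigma_finite_measure WW" by (rule prob_space_imp_sigma_finite[OF prob_WW])
lemma sf_WZ: "sigma_finite_measure (WW \<Otimes>\<^sub>M ZZ)"
  by (rule prob_space_imp_sigma_finite[OF prob_space_pair[OF prob_WW prob_ZZ]])

lemma mx[measurable]: "(\<lambda>x. x i) \<in> borel_measurable PN"
  unfolding P_N_def by (rule PiM_comp_meas[OF sP])

lemma mW[measurable]: "(\<lambda>W. W i j) \<in> borel_measurable WW"
  by (rule PiM_comp_meas2) simp

lemma mz[measurable]: "(\<lambda>z. z i) \<in> borel_measurable ZZ"
  by (rule PiM_comp_meas) simp

lemma mxbar[measurable]: "(\<lambda>xb. xb i) \<in> borel_measurable (P_N P N)"
  by (rule mx)

lemma AE_x: "AE x in PN. \<forall>i<N. \<bar>x i\<bar> \<le> K"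
proof -
  have "\<forall>i\<in>{..<N}. AE x in PN. \<bar>x i\<bar> \<le> K"
    unfolding P_N_def using AE_PiM_component[of "{..<N}" "\<lambda>_. P" _ "\<lambda>y. \<bar>y\<bar> \<le> K"] P KP by auto
  then have "AE x in PN. \<forall>i\<in>{..<N}. \<bar>x i\<bar> \<le> K" by (simp add: eventually_ball_finite)
  then show ?thesis by (rule eventually_mono) auto
qed

lemma AE_xbar: "AE \<omega> in Om. \<forall>i<N. \<bar>fst \<omega> i\<bar> \<le> K"
proof -
  have d: "distr Om PN fst = PN"
    unfolding Omega_def by (rule prob_space.distr_pair_fst[OF prob_space_pair[OF prob_WW prob_ZZ]])
  have "AE x in distr Om PN fst. \<forall>i<N. \<bar>x i\<bar> \<le> K" by (subst d) (rule AE_x)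
  then show ?thesis by (rule AE_distrD[rotated]) (simp add: Omega_def)
qed

lemma rsW:
  assumes "i < N" "j < N"
  shows "resamp Om gauss (\<lambda>p w. (fst p, ((fst (snd p))(i := (fst (snd p) i)(j := w)), snd (snd p))))"
proof -
  have r1: "resamp ZZ gauss (\<lambda>x w. x(j := w))"
    by (rule resamp_PiM[OF gauss_prob]) (use assms in auto)
  have r2: "resamp WW gauss (\<lambda>x w. x(i := (x i)(j := w)))"
    by (rule resamp_nested[OF prob_ZZ gauss_sf _ _ r1]) (use assms in auto)
  have r3: "resamp (WW \<Otimes>\<^sub>M ZZ) gauss (\<lambda>p w. ((fst p)(i := (fst p i)(j := w)), snd p))"
    using resamp_pair_left[OF sf_ZZ gauss_sf r2] by simp
  show ?thesis
    unfolding Omega_def using resamp_pair_right[OF sf_WZ gauss_sf r3, of PN] by simp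
qed

lemma rsZ:
  assumes "i < N"
  shows "resamp Om gauss (\<lambda>p w. (fst p, (fst (snd p), (snd (snd p))(i := w))))"
proof -
  have r1: "resamp ZZ gauss (\<lambda>x w. x(i := w))"
    by (rule resamp_PiM[OF gauss_prob]) (use assms in auto)
  have r3: "resamp (WW \<Otimes>\<^sub>M ZZ) gauss (\<lambda>p w. (fst p, (snd p)(i := w)))"
    using resamp_pair_right[OF sf_ZZ gauss_sf r1, of WW] by simp
  show ?thesis
    unfolding Omega_def using resamp_pair_right[OF sf_WZ gauss_sf r3, of PN] by simp
qed

lemma mWO[measurable]: "(\<lambda>\<omega>. fst (snd \<omega>) i j) \<in> borel_measurable Om"
  unfolding Omega_def by measurable

lemma mzO[measurable]: "(\<lambda>\<omega>. snd (snd \<omega>) i) \<in> borel_measurable Om"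
  unfolding Omega_def by measurable

lemma mxbO[measurable]: "(\<lambda>\<omega>. fst \<omega> i) \<in> borel_measurable Om"
  unfolding Omega_def by measurable

lemma int_W: "i < N \<Longrightarrow> j < N \<Longrightarrow> integrable Om (\<lambda>\<omega>. fst (snd \<omega>) i j)"
  by (rule resamp_coord_int(2)[OF prob_Om rsW[of i j]]) auto

lemma int_z: "i < N \<Longrightarrow> integrable Om (\<lambda>\<omega>. snd (snd \<omega>) i)"
  by (rule resamp_coord_int(2)[OF prob_Om rsZ[of i]]) auto

end

lemma inner_bound1:
  assumes "\<forall>i<N. \<bar>x i\<bar> \<le> K"
  shows "\<bar>inner_N N x y\<bar> \<le> K * (\<Sum>i<N. \<bar>y i\<bar>)"
proof -
  have "\<bar>inner_N N x y\<bar> \<le> (\<Sum>i<N. \<bar>x i * y i\<bar>)" unfolding inner_N_def by (rule sum_abs)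
  also have "\<dots> \<le> (\<Sum>i<N. K * \<bar>y i\<bar>)"
    by (rule sum_mono) (use assms in \<open>auto simp: abs_mult intro: mult_right_mono\<close>)
  finally show ?thesis by (simp add: sum_distrib_left)
qed

lemma inner_bound2:
  assumes "\<forall>i<N. \<bar>x i\<bar> \<le> K" "\<forall>i<N. \<bar>y i\<bar> \<le> K"
  shows "\<bar>inner_N N x y\<bar> \<le> real N * K\<^sup>2"
proof -
  have "\<bar>inner_N N x y\<bar> \<le> K * (\<Sum>i<N. \<bar>y i\<bar>)" by (rule inner_bound1[OF assms(1)])
  also have "\<dots> \<le> K * (\<Sum>i<N. K)"
  proof (cases "N = 0")
    case False
    then have "0 \<le> K" using assms(1) by (metis abs_ge_zero order.trans neq0_conv)
    then show ?thesis by (intro mult_left_mono sum_mono) (use assms(2) in auto)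
  qed simp
  finally show ?thesis by (simp add: power2_eq_square ac_simps)
qed

lemma norm4_bound:
  assumes "\<forall>i<N. \<bar>x i\<bar> \<le> K"
  shows "(norm_N N x)^4 \<le> (real N * K\<^sup>2)\<^sup>2"
proof -
  have "(norm_N N x)^4 = ((norm_N N x)\<^sup>2)\<^sup>2" by simp
  also have "\<dots> \<le> (real N * K\<^sup>2)\<^sup>2" by (rule power_mono[OF norm_N_bound[OF assms]]) simp
  finally show ?thesis .
qed

lemma quad_bound2:
  assumes "\<forall>i<N. \<bar>x i\<bar> \<le> K"
  shows "\<bar>inner_N N x (matvec_N N W x)\<bar> \<le> K\<^sup>2 * (\<Sum>p\<in>{..<N}\<times>{..<N}. \<bar>W (fst p) (snd p)\<bar>)"
proof -
  have "\<bar>inner_N N x (matvec_N N W x)\<bar> \<le> (\<Sum>p\<in>{..<N}\<times>{..<N}. \<bar>W (fst p) (snd p) * (x (fst p) * x (snd p))\<bar>)"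
    unfolding quad_sum by (rule sum_abs)
  also have "\<dots> \<le> (\<Sum>p\<in>{..<N}\<times>{..<N}. K\<^sup>2 * \<bar>W (fst p) (snd p)\<bar>)"
  proof (rule sum_mono)
    fix p assume p: "p \<in> {..<N}\<times>{..<N}"
    have "\<bar>x (fst p) * x (snd p)\<bar> \<le> K * K"
      unfolding abs_mult by (rule mult_mono) (use p assms in auto)
    note xx = this
    have "\<bar>W (fst p) (snd p) * (x (fst p) * x (snd p))\<bar> = \<bar>W (fst p) (snd p)\<bar> * \<bar>x (fst p) * x (snd p)\<bar>"
      by (rule abs_mult)
    also have "\<dots> \<le> \<bar>W (fst p) (snd p)\<bar> * (K * K)" by (rule mult_left_mono[OF xx]) simp
    also have "\<dots> = K\<^sup>2 * \<bar>W (fst p) (snd p)\<bar>" by (simp add: power2_eq_square)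
    finally show "\<bar>W (fst p) (snd p) * (x (fst p) * x (snd p))\<bar> \<le> K\<^sup>2 * \<bar>W (fst p) (snd p)\<bar>" .
  qed
  finally show ?thesis by (simp add: sum_distrib_left)
qed

type_synonym om = "(nat \<Rightarrow> real) \<times> (nat \<Rightarrow> nat \<Rightarrow> real) \<times> (nat \<Rightarrow> real)"

context conc
begin

abbreviation "Jt \<equiv> {..<N} \<times> {..<N}"
definition Gt :: "nat \<times> nat \<Rightarrow> om \<Rightarrow> real" where "Gt p \<omega> = fst (snd \<omega>) (fst p) (snd p)"
definition phit :: "nat \<times> nat \<Rightarrow> (nat \<Rightarrow> real) \<Rightarrow> real" where "phit p x = x (fst p) * x (snd p) / sqrt (real N)"
definition Bt :: "om \<Rightarrow> (nat \<Rightarrow> real) \<Rightarrow> real" where "Bt \<omega> x = (inner_N N x (fst \<omega>))\<^sup>2 / real N - (norm_N N x)^4 / (2 * real N)"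
definition Rt :: "real \<Rightarrow> om \<Rightarrow> (nat \<Rightarrow> real) \<Rightarrow> real" where "Rt h \<omega> x = sqrt h * inner_N N (snd (snd \<omega>)) x + h * inner_N N x (fst \<omega>) - h / 2 * (norm_N N x)\<^sup>2"
definition updt :: "nat \<times> nat \<Rightarrow> om \<Rightarrow> real \<Rightarrow> om" where "updt p \<omega> w = (fst \<omega>, ((fst (snd \<omega>))(fst p := (fst (snd \<omega>) (fst p))(snd p := w)), snd (snd \<omega>)))"
definition rRt :: "real \<Rightarrow> om \<Rightarrow> real" where "rRt h \<omega> = sqrt h * K * (\<Sum>i<N. \<bar>snd (snd \<omega>) i\<bar>) + 3/2 * h * real N * K\<^sup>2"

lemma m_inner_pair[measurable]: "(\<lambda>p. inner_N N (snd p) (fst (fst p))) \<in> borel_measurable (Om \<Otimes>\<^sub>M PN)"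
  unfolding inner_N_def by measurable

lemma m_inner_z[measurable]: "(\<lambda>p. inner_N N (snd (snd (fst p))) (snd p)) \<in> borel_measurable (Om \<Otimes>\<^sub>M PN)"
  unfolding inner_N_def by measurable

lemma m_norm[measurable]: "(\<lambda>x. norm_N N x) \<in> borel_measurable PN"
  unfolding norm_N_def inner_N_def by measurable

lemma m_quad[measurable]: "(\<lambda>p. inner_N N (snd p) (matvec_N N (fst (snd (fst p))) (snd p))) \<in> borel_measurable (Om \<Otimes>\<^sub>M PN)"
  unfolding inner_N_def matvec_N_def by measurable

lemma Bt_bound:
  fixes M :: real
  assumes x: "\<forall>i<N. \<bar>x i\<bar> \<le> M" and y: "\<forall>i<N. \<bar>fst \<omega> i\<bar> \<le> M"
  shows "\<bar>Bt \<omega> x\<bar> \<le> 3/2 * real N * M^4"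
proof -
  have i: "\<bar>inner_N N x (fst \<omega>)\<bar> \<le> real N * M\<^sup>2" by (rule inner_bound2[OF x y])
  have "(inner_N N x (fst \<omega>))\<^sup>2 \<le> (real N * M\<^sup>2)\<^sup>2" by (rule sq_le_of_abs[OF i])
  then have a1: "(inner_N N x (fst \<omega>))\<^sup>2 / real N \<le> real N * M^4"
    using Np by (simp add: divide_le_eq power2_eq_square power4_eq_xxxx ac_simps)
  have "(norm_N N x)^4 / (2 * real N) \<le> (real N * M\<^sup>2)\<^sup>2 / (2 * real N)"
    by (rule divide_right_mono[OF norm4_bound[OF x]]) simp
  also have "\<dots> = real N * M^4 / 2" using Np by (simp add: power2_eq_square power4_eq_xxxx)
  finally have a2: "(norm_N N x)^4 / (2 * real N) \<le> real N * M^4 / 2" .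
  have p1: "0 \<le> (inner_N N x (fst \<omega>))\<^sup>2 / real N" by simp
  have p2: "0 \<le> (norm_N N x)^4 / (2 * real N)" using norm_N_nonneg[of N x] by simp
  have p3: "0 \<le> real N * M^4" by simp
  show ?thesis unfolding Bt_def
  proof (rule abs_leI)
    show "(inner_N N x (fst \<omega>))\<^sup>2 / real N - (norm_N N x)^4 / (2 * real N) \<le> 3/2 * real N * M^4"
      using a1 p2 p3 by linarith
    show "- ((inner_N N x (fst \<omega>))\<^sup>2 / real N - (norm_N N x)^4 / (2 * real N)) \<le> 3/2 * real N * M^4"
      using a2 p1 p3 by linarith
  qed
qed

lemma Rt_bound:
  fixes M :: real
  assumes h: "0 \<le> h" and x: "\<forall>i<N. \<bar>x i\<bar> \<le> M" and y: "\<forall>i<N. \<bar>fst \<omega> i\<bar> \<le> M"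
  shows "\<bar>Rt h \<omega> x\<bar> \<le> sqrt h * M * (\<Sum>i<N. \<bar>snd (snd \<omega>) i\<bar>) + 3/2 * h * real N * M\<^sup>2"
proof -
  have "\<bar>inner_N N (snd (snd \<omega>)) x\<bar> \<le> M * (\<Sum>i<N. \<bar>snd (snd \<omega>) i\<bar>)"
    using inner_bound1[OF x, of "snd (snd \<omega>)"] by (simp add: inner_N_comm)
  then have a1: "\<bar>sqrt h * inner_N N (snd (snd \<omega>)) x\<bar> \<le> sqrt h * M * (\<Sum>i<N. \<bar>snd (snd \<omega>) i\<bar>)"
    using h by (simp add: abs_mult mult_left_mono mult.assoc)
  have "\<bar>inner_N N x (fst \<omega>)\<bar> \<le> real N * M\<^sup>2" by (rule inner_bound2[OF x y])
  then have a2: "\<bar>h * inner_N N x (fst \<omega>)\<bar> \<le> h * (real N * M\<^sup>2)"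
    using h by (simp add: abs_mult mult_left_mono)
  have "(norm_N N x)\<^sup>2 \<le> real N * M\<^sup>2" by (rule norm_N_bound[OF x])
  then have a3: "\<bar>h / 2 * (norm_N N x)\<^sup>2\<bar> \<le> h / 2 * (real N * M\<^sup>2)"
    using h by (simp add: abs_mult mult_left_mono)
  have "\<bar>Rt h \<omega> x\<bar> \<le> \<bar>sqrt h * inner_N N (snd (snd \<omega>)) x\<bar> + \<bar>h * inner_N N x (fst \<omega>)\<bar> + \<bar>h / 2 * (norm_N N x)\<^sup>2\<bar>"
    unfolding Rt_def by linarith
  also have "\<dots> \<le> sqrt h * M * (\<Sum>i<N. \<bar>snd (snd \<omega>) i\<bar>) + 3/2 * h * real N * M\<^sup>2" using a1 a2 a3 by (simp add: algebra_simps)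
  finally show ?thesis .
qed

lemma ogt:
  assumes h: "h \<ge> 0"
  shows "ogibbs Om PN (real N) Jt Gt phit Bt (Rt h) updt (K\<^sup>2 / sqrt (real N)) (3/2 * real N * K^4) (rRt h)"
proof (rule ogibbs.intro)
  show "prob_space Om" by (rule prob_Om)
  show "prob_space PN" by (rule prob_PN)
  show "0 < real N" by (rule Np)
  show "finite Jt" by simp
  show "Gt k \<in> borel_measurable Om" for k unfolding Gt_def by measurable
  show "phit k \<in> borel_measurable PN" for k unfolding phit_def by measurable
  show "(\<lambda>p. Bt (fst p) (snd p)) \<in> borel_measurable (Om \<Otimes>\<^sub>M PN)" unfolding Bt_def by measurable
  show "(\<lambda>p. Rt h (fst p) (snd p)) \<in> borel_measurable (Om \<Otimes>\<^sub>M PN)" unfolding Rt_def by measurable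
  show "Bt \<omega> \<in> borel_measurable PN" for \<omega> unfolding Bt_def inner_N_def by measurable
  show "Rt h \<omega> \<in> borel_measurable PN" for \<omega> unfolding Rt_def inner_N_def by measurable
  show "AE x in PN. \<bar>phit k x\<bar> \<le> K\<^sup>2 / sqrt (real N)" if k: "k \<in> Jt" for k
    using AE_x
  proof eventually_elim
    case (elim x)
    have "\<bar>x (fst k) * x (snd k)\<bar> \<le> K * K" unfolding abs_mult by (rule mult_mono) (use k elim in auto)
    then show ?case unfolding phit_def using Np by (simp add: abs_divide divide_right_mono power2_eq_square)
  qed
  show "\<exists>b. AE x in PN. \<bar>Bt \<omega> x\<bar> \<le> b" for \<omega>
  proof -
    define M where "M = max K (Max ((\<lambda>i. \<bar>fst \<omega> i\<bar>) ` {..<N}))"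
    have y: "\<forall>i<N. \<bar>fst \<omega> i\<bar> \<le> M" unfolding M_def by (auto intro: max.coboundedI2)
    have "AE x in PN. \<bar>Bt \<omega> x\<bar> \<le> 3/2 * real N * M^4"
      using AE_x
    proof eventually_elim
      case (elim x)
      then have "\<forall>i<N. \<bar>x i\<bar> \<le> M" unfolding M_def by (auto intro: max.coboundedI1)
      from Bt_bound[OF this y] show ?case .
    qed
    then show ?thesis by blast
  qed
  show "\<exists>r. AE x in PN. \<bar>Rt h \<omega> x\<bar> \<le> r" for \<omega>
  proof -
    define M where "M = max K (Max ((\<lambda>i. \<bar>fst \<omega> i\<bar>) ` {..<N}))"
    have y: "\<forall>i<N. \<bar>fst \<omega> i\<bar> \<le> M" unfolding M_def by (auto intro: max.coboundedI2)
    have "AE x in PN. \<bar>Rt h \<omega> x\<bar> \<le> sqrt h * M * (\<Sum>i<N. \<bar>snd (snd \<omega>) i\<bar>) + 3/2 * h * real N * M\<^sup>2"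
      using AE_x
    proof eventually_elim
      case (elim x)
      then have "\<forall>i<N. \<bar>x i\<bar> \<le> M" unfolding M_def by (auto intro: max.coboundedI1)
      from Rt_bound[OF h this y] show ?case .
    qed
    then show ?thesis by blast
  qed
  show "AE \<omega> in Om. AE x in PN. \<bar>Bt \<omega> x\<bar> \<le> 3/2 * real N * K^4"
    using AE_xbar
  proof eventually_elim
    case (elim \<omega>)
    note xb = elim
    from AE_x show ?case
    proof eventually_elim
      case (elim x)
      show ?case by (rule Bt_bound[OF elim xb])
    qed
  qed
  show "AE \<omega> in Om. AE x in PN. \<bar>Rt h \<omega> x\<bar> \<le> rRt h \<omega>"
    using AE_xbar
  proof eventually_elim
    case (elim \<omega>)
    note xb = elim
    from AE_x show ?case
    proof eventually_elim
      case (elim x)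
      show ?case unfolding rRt_def by (rule Rt_bound[OF h elim xb])
    qed
  qed
  show "integrable Om (rRt h)"
  proof -
    have i1: "integrable Om (\<lambda>\<omega>. \<Sum>i<N. \<bar>snd (snd \<omega>) i\<bar>)"
      by (intro Bochner_Integration.integrable_sum integrable_abs int_z) simp
    interpret Omp: prob_space Om by (rule prob_Om)
    show ?thesis unfolding rRt_def using i1 by simp
  qed
  show "resamp Om gauss (updt k)" if "k \<in> Jt" for k
    using rsW[of "fst k" "snd k"] that unfolding updt_def by (auto simp: mem_Times_iff)
  show "Gt k (updt k \<omega> w) = w" for k w \<omega> unfolding Gt_def updt_def by simp
  show "Gt l (updt k \<omega> w) = Gt l \<omega>" if "l \<noteq> k" for k l w \<omega>
    using that unfolding Gt_def updt_def by (cases k, cases l) auto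
  show "Bt (updt k \<omega> w) = Bt \<omega>" for k w \<omega> unfolding Bt_def updt_def by simp
  show "Rt h (updt k \<omega> w) = Rt h \<omega>" for k w \<omega> unfolding Rt_def updt_def by simp
qed

end

context conc
begin

abbreviation "Jh \<equiv> {..<N}"
definition Gh :: "nat \<Rightarrow> om \<Rightarrow> real" where "Gh i \<omega> = snd (snd \<omega>) i"
definition phih :: "nat \<Rightarrow> (nat \<Rightarrow> real) \<Rightarrow> real" where "phih i x = x i"
definition Bh :: "om \<Rightarrow> (nat \<Rightarrow> real) \<Rightarrow> real" where "Bh \<omega> x = inner_N N x (fst \<omega>) - (norm_N N x)\<^sup>2 / 2"
definition Rh :: "real \<Rightarrow> om \<Rightarrow> (nat \<Rightarrow> real) \<Rightarrow> real" where
  "Rh t \<omega> x = sqrt (t / real N) * inner_N N x (matvec_N N (fst (snd \<omega>)) x) + t / real N * (inner_N N x (fst \<omega>))\<^sup>2 - t / (2 * real N) * (norm_N N x) ^ 4"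
definition updh :: "nat \<Rightarrow> om \<Rightarrow> real \<Rightarrow> om" where "updh i \<omega> w = (fst \<omega>, (fst (snd \<omega>), (snd (snd \<omega>))(i := w)))"
definition rRh :: "real \<Rightarrow> om \<Rightarrow> real" where
  "rRh t \<omega> = sqrt (t / real N) * K\<^sup>2 * (\<Sum>p\<in>Jt. \<bar>fst (snd \<omega>) (fst p) (snd p)\<bar>) + 3/2 * t * real N * K^4"

lemma Bh_bound:
  fixes M :: real
  assumes x: "\<forall>i<N. \<bar>x i\<bar> \<le> M" and y: "\<forall>i<N. \<bar>fst \<omega> i\<bar> \<le> M"
  shows "\<bar>Bh \<omega> x\<bar> \<le> 3/2 * real N * M\<^sup>2"
proof -
  have i: "\<bar>inner_N N x (fst \<omega>)\<bar> \<le> real N * M\<^sup>2" by (rule inner_bound2[OF x y])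
  have n: "(norm_N N x)\<^sup>2 \<le> real N * M\<^sup>2" by (rule norm_N_bound[OF x])
  have n0: "0 \<le> (norm_N N x)\<^sup>2" by simp
  have i1: "inner_N N x (fst \<omega>) \<le> real N * M\<^sup>2" "- inner_N N x (fst \<omega>) \<le> real N * M\<^sup>2" using i by auto
  show ?thesis unfolding Bh_def
    by (rule abs_leI) (use i1 n n0 in linarith)+
qed

lemma Rh_bound:
  fixes M :: real
  assumes t: "0 \<le> t" and x: "\<forall>i<N. \<bar>x i\<bar> \<le> M" and y: "\<forall>i<N. \<bar>fst \<omega> i\<bar> \<le> M"
  shows "\<bar>Rh t \<omega> x\<bar> \<le> sqrt (t / real N) * M\<^sup>2 * (\<Sum>p\<in>Jt. \<bar>fst (snd \<omega>) (fst p) (snd p)\<bar>) + 3/2 * t * real N * M^4"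
proof -
  have q: "\<bar>inner_N N x (matvec_N N (fst (snd \<omega>)) x)\<bar> \<le> M\<^sup>2 * (\<Sum>p\<in>Jt. \<bar>fst (snd \<omega>) (fst p) (snd p)\<bar>)"
    by (rule quad_bound2[OF x])
  have a1: "\<bar>sqrt (t / real N) * inner_N N x (matvec_N N (fst (snd \<omega>)) x)\<bar> \<le> sqrt (t / real N) * M\<^sup>2 * (\<Sum>p\<in>Jt. \<bar>fst (snd \<omega>) (fst p) (snd p)\<bar>)"
  proof -
    have st: "0 \<le> sqrt (t / real N)" using t by simp
    have "\<bar>sqrt (t / real N) * inner_N N x (matvec_N N (fst (snd \<omega>)) x)\<bar> = sqrt (t / real N) * \<bar>inner_N N x (matvec_N N (fst (snd \<omega>)) x)\<bar>"
      using st by (simp add: abs_mult)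
    also have "\<dots> \<le> sqrt (t / real N) * (M\<^sup>2 * (\<Sum>p\<in>Jt. \<bar>fst (snd \<omega>) (fst p) (snd p)\<bar>))"
      by (rule mult_left_mono[OF q st])
    finally show ?thesis by (simp add: mult.assoc)
  qed
  have i: "\<bar>inner_N N x (fst \<omega>)\<bar> \<le> real N * M\<^sup>2" by (rule inner_bound2[OF x y])
  have "(inner_N N x (fst \<omega>))\<^sup>2 \<le> (real N * M\<^sup>2)\<^sup>2" by (rule sq_le_of_abs[OF i])
  then have "t / real N * (inner_N N x (fst \<omega>))\<^sup>2 \<le> t / real N * (real N * M\<^sup>2)\<^sup>2"
    by (rule mult_left_mono) (use t in simp)
  also have "\<dots> = t * real N * M^4" using Np by (simp add: power2_eq_square power4_eq_xxxx)
  finally have a2: "t / real N * (inner_N N x (fst \<omega>))\<^sup>2 \<le> t * real N * M^4" .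
  have "t / (2 * real N) * (norm_N N x) ^ 4 \<le> t / (2 * real N) * (real N * M\<^sup>2)\<^sup>2"
    by (rule mult_left_mono[OF norm4_bound[OF x]]) (use t in simp)
  also have "\<dots> = t * real N * M^4 / 2" using Np by (simp add: power2_eq_square power4_eq_xxxx)
  finally have a3: "t / (2 * real N) * (norm_N N x) ^ 4 \<le> t * real N * M^4 / 2" .
  have p2: "0 \<le> t / real N * (inner_N N x (fst \<omega>))\<^sup>2" using t by simp
  have p3: "0 \<le> t / (2 * real N) * (norm_N N x) ^ 4" using t norm_N_nonneg[of N x] by simp
  have b1: "sqrt (t / real N) * inner_N N x (matvec_N N (fst (snd \<omega>)) x) \<le> sqrt (t / real N) * M\<^sup>2 * (\<Sum>p\<in>Jt. \<bar>fst (snd \<omega>) (fst p) (snd p)\<bar>)"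
    "- (sqrt (t / real N) * inner_N N x (matvec_N N (fst (snd \<omega>)) x)) \<le> sqrt (t / real N) * M\<^sup>2 * (\<Sum>p\<in>Jt. \<bar>fst (snd \<omega>) (fst p) (snd p)\<bar>)"
    using a1 by linarith+
  show ?thesis unfolding Rh_def
    by (rule abs_leI) (use b1 a2 a3 p2 p3 in linarith)+
qed

lemma ogh:
  assumes t: "t \<ge> 0"
  shows "ogibbs Om PN (real N) Jh Gh phih Bh (Rh t) updh K (3/2 * real N * K\<^sup>2) (rRh t)"
proof (rule ogibbs.intro)
  show "prob_space Om" by (rule prob_Om)
  show "prob_space PN" by (rule prob_PN)
  show "0 < real N" by (rule Np)
  show "finite Jh" by simp
  show "Gh k \<in> borel_measurable Om" for k unfolding Gh_def by measurable
  show "phih k \<in> borel_measurable PN" for k unfolding phih_def by measurable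
  show "(\<lambda>p. Bh (fst p) (snd p)) \<in> borel_measurable (Om \<Otimes>\<^sub>M PN)" unfolding Bh_def by measurable
  show "(\<lambda>p. Rh t (fst p) (snd p)) \<in> borel_measurable (Om \<Otimes>\<^sub>M PN)" unfolding Rh_def by measurable
  show "Bh \<omega> \<in> borel_measurable PN" for \<omega> unfolding Bh_def inner_N_def by measurable
  show "Rh t \<omega> \<in> borel_measurable PN" for \<omega> unfolding Rh_def inner_N_def matvec_N_def by measurable
  show "AE x in PN. \<bar>phih k x\<bar> \<le> K" if k: "k \<in> Jh" for k
    using AE_x by eventually_elim (use k in \<open>auto simp: phih_def\<close>)
  show "\<exists>b. AE x in PN. \<bar>Bh \<omega> x\<bar> \<le> b" for \<omega>
  proof -
    define M where "M = max K (Max ((\<lambda>i. \<bar>fst \<omega> i\<bar>) ` {..<N}))"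
    have y: "\<forall>i<N. \<bar>fst \<omega> i\<bar> \<le> M" unfolding M_def by (auto intro: max.coboundedI2)
    have "AE x in PN. \<bar>Bh \<omega> x\<bar> \<le> 3/2 * real N * M\<^sup>2"
      using AE_x
    proof eventually_elim
      case (elim x)
      then have "\<forall>i<N. \<bar>x i\<bar> \<le> M" unfolding M_def by (auto intro: max.coboundedI1)
      from Bh_bound[OF this y] show ?case .
    qed
    then show ?thesis by blast
  qed
  show "\<exists>r. AE x in PN. \<bar>Rh t \<omega> x\<bar> \<le> r" for \<omega>
  proof -
    define M where "M = max K (Max ((\<lambda>i. \<bar>fst \<omega> i\<bar>) ` {..<N}))"
    have y: "\<forall>i<N. \<bar>fst \<omega> i\<bar> \<le> M" unfolding M_def by (auto intro: max.coboundedI2)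
    have "AE x in PN. \<bar>Rh t \<omega> x\<bar> \<le> sqrt (t / real N) * M\<^sup>2 * (\<Sum>p\<in>Jt. \<bar>fst (snd \<omega>) (fst p) (snd p)\<bar>) + 3/2 * t * real N * M^4"
      using AE_x
    proof eventually_elim
      case (elim x)
      then have "\<forall>i<N. \<bar>x i\<bar> \<le> M" unfolding M_def by (auto intro: max.coboundedI1)
      from Rh_bound[OF t this y] show ?case .
    qed
    then show ?thesis by blast
  qed
  show "AE \<omega> in Om. AE x in PN. \<bar>Bh \<omega> x\<bar> \<le> 3/2 * real N * K\<^sup>2"
    using AE_xbar
  proof eventually_elim
    case (elim \<omega>)
    note xb = elim
    from AE_x show ?case
    proof eventually_elim
      case (elim x)
      show ?case by (rule Bh_bound[OF elim xb])
    qed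
  qed
  show "AE \<omega> in Om. AE x in PN. \<bar>Rh t \<omega> x\<bar> \<le> rRh t \<omega>"
    using AE_xbar
  proof eventually_elim
    case (elim \<omega>)
    note xb = elim
    from AE_x show ?case
    proof eventually_elim
      case (elim x)
      show ?case unfolding rRh_def by (rule Rh_bound[OF t elim xb])
    qed
  qed
  show "integrable Om (rRh t)"
  proof -
    have i1: "integrable Om (\<lambda>\<omega>. \<Sum>p\<in>Jt. \<bar>fst (snd \<omega>) (fst p) (snd p)\<bar>)"
      by (intro Bochner_Integration.integrable_sum integrable_abs int_W) auto
    interpret Omp: prob_space Om by (rule prob_Om)
    show ?thesis unfolding rRh_def using i1 by simp
  qed
  show "resamp Om gauss (updh k)" if "k \<in> Jh" for k
    using rsZ[of k] that unfolding updh_def by auto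
  show "Gh k (updh k \<omega> w) = w" for k w \<omega> unfolding Gh_def updh_def by simp
  show "Gh l (updh k \<omega> w) = Gh l \<omega>" if "l \<noteq> k" for k l w \<omega>
    using that unfolding Gh_def updh_def by auto
  show "Bh (updh k \<omega> w) = Bh \<omega>" for k w \<omega> unfolding Bh_def updh_def by simp
  show "Rh t (updh k \<omega> w) = Rh t \<omega>" for k w \<omega> unfolding Rh_def updh_def by simp
qed

lemma H_t:
  assumes s: "0 \<le> s"
  shows "H_N N s h xbar W z x = sqrt s * (\<Sum>p\<in>Jt. Gt p (xbar, W, z) * phit p x) + (sqrt s)\<^sup>2 * Bt (xbar, W, z) x + Rt h (xbar, W, z) x"
proof -
  have "(\<Sum>p\<in>Jt. Gt p (xbar, W, z) * phit p x) = inner_N N x (matvec_N N W x) / sqrt (real N)"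
    unfolding quad_sum Gt_def phit_def by (simp add: sum_divide_distrib)
  moreover have "sqrt (s / real N) = sqrt s / sqrt (real N)" by (simp add: real_sqrt_divide)
  moreover have "(sqrt s)\<^sup>2 = s" using s by simp
  ultimately show ?thesis unfolding H_N_def Bt_def Rt_def by (simp add: algebra_simps)
qed

lemma H_h:
  assumes h: "0 \<le> h"
  shows "H_N N t h xbar W z x = sqrt h * (\<Sum>i\<in>Jh. Gh i (xbar, W, z) * phih i x) + (sqrt h)\<^sup>2 * Bh (xbar, W, z) x + Rh t (xbar, W, z) x"
proof -
  have "(\<Sum>i\<in>Jh. Gh i (xbar, W, z) * phih i x) = inner_N N z x"
    unfolding Gh_def phih_def inner_N_def by simp
  moreover have "(sqrt h)\<^sup>2 = h" using h by simp
  ultimately show ?thesis unfolding H_N_def Bh_def Rh_def by (simp add: algebra_simps)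
qed

end

context conc
begin

lemma F_t_eq:
  assumes h: "0 \<le> h" and s: "0 \<le> s"
  shows "F_N P N s h \<omega> = ogibbs.psi PN (real N) Jt Gt phit Bt (Rt h) \<omega> (sqrt s)"
proof -
  interpret T: ogibbs Om PN "real N" Jt Gt phit Bt "Rt h" updt "K\<^sup>2 / sqrt (real N)" "3/2 * real N * K^4" "rRt h"
    by (rule ogt[OF h])
  obtain xbar W z where w: "\<omega> = (xbar, W, z)" by (cases \<omega>) auto
  have "(\<integral>x. exp (H_N N s h xbar W z x) \<partial>PN) = gZ PN (T.A \<omega>) (Bt \<omega>) (Rt h \<omega>) (sqrt s)"
    unfolding gZ_def gw_def T.A_def w H_t[OF s] ..
  then show ?thesis unfolding F_N_def T.psi_def w by simp
qed

lemma F_h_eq: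
  assumes t: "0 \<le> t" and s: "0 \<le> s"
  shows "F_N P N t s \<omega> = ogibbs.psi PN (real N) Jh Gh phih Bh (Rh t) \<omega> (sqrt s)"
proof -
  interpret T: ogibbs Om PN "real N" Jh Gh phih Bh "Rh t" updh K "3/2 * real N * K\<^sup>2" "rRh t"
    by (rule ogh[OF t])
  obtain xbar W z where w: "\<omega> = (xbar, W, z)" by (cases \<omega>) auto
  have "(\<integral>x. exp (H_N N t s xbar W z x) \<partial>PN) = gZ PN (T.A \<omega>) (Bh \<omega>) (Rh t \<omega>) (sqrt s)"
    unfolding gZ_def gw_def T.A_def w H_h[OF s] ..
  then show ?thesis unfolding F_N_def T.psi_def w by simp
qed

lemma Fbar_t:
  assumes t: "0 \<le> t" and h: "0 \<le> h"
  shows "\<exists>D. ((\<lambda>s. Fbar_N P N s h) has_real_derivative D) (at t within {0..}) \<and> \<bar>D\<bar> \<le> 2 * K^4"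
proof -
  interpret T: ogibbs Om PN "real N" Jt Gt phit Bt "Rt h" updt "K\<^sup>2 / sqrt (real N)" "3/2 * real N * K^4" "rRt h"
    by (rule ogt[OF h])
  have eq: "Fbar_N P N s h = T.Phi (sqrt s)" if "0 \<le> s" for s
  proof -
    have "F_N P N s h = (\<lambda>\<omega>. T.psi \<omega> (sqrt s))" using F_t_eq[OF h that] by (simp add: fun_eq_iff)
    then show ?thesis unfolding Fbar_N_def T.Phi_def by simp
  qed
  obtain D where D: "((\<lambda>s. T.Phi (sqrt s)) has_real_derivative D) (at t within {0..})"
    and b: "\<bar>D\<bar> \<le> (real (card Jt) * (K\<^sup>2 / sqrt (real N))\<^sup>2 + 2 * (3/2 * real N * K^4)) / real N / 2"
    using T.Fbar_deriv[OF t] by blast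
  have "((\<lambda>s. Fbar_N P N s h) has_real_derivative D) (at t within {0..})"
    by (rule has_field_derivative_transform_within[OF D zero_less_one]) (use t eq in auto)
  moreover have "(real (card Jt) * (K\<^sup>2 / sqrt (real N))\<^sup>2 + 2 * (3/2 * real N * K^4)) / real N / 2 = 2 * K^4"
    using Np by (simp add: power_divide power2_eq_square power4_eq_xxxx field_simps)
  ultimately show ?thesis using b by auto
qed

lemma Fbar_h:
  assumes t: "0 \<le> t" and h: "0 \<le> h"
  shows "\<exists>D. ((\<lambda>s. Fbar_N P N t s) has_real_derivative D) (at h within {0..}) \<and> \<bar>D\<bar> \<le> 2 * K\<^sup>2"
proof -
  interpret T: ogibbs Om PN "real N" Jh Gh phih Bh "Rh t" updh K "3/2 * real N * K\<^sup>2" "rRh t"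
    by (rule ogh[OF t])
  have eq: "Fbar_N P N t s = T.Phi (sqrt s)" if "0 \<le> s" for s
  proof -
    have "F_N P N t s = (\<lambda>\<omega>. T.psi \<omega> (sqrt s))" using F_h_eq[OF t that] by (simp add: fun_eq_iff)
    then show ?thesis unfolding Fbar_N_def T.Phi_def by simp
  qed
  obtain D where D: "((\<lambda>s. T.Phi (sqrt s)) has_real_derivative D) (at h within {0..})"
    and b: "\<bar>D\<bar> \<le> (real (card Jh) * K\<^sup>2 + 2 * (3/2 * real N * K\<^sup>2)) / real N / 2"
    using T.Fbar_deriv[OF h] by blast
  have "((\<lambda>s. Fbar_N P N t s) has_real_derivative D) (at h within {0..})"
    by (rule has_field_derivative_transform_within[OF D zero_less_one]) (use h eq in auto)
  moreover have "(real (card Jh) * K\<^sup>2 + 2 * (3/2 * real N * K\<^sup>2)) / real N / 2 = 2 * K\<^sup>2"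
    using Np by (simp add: field_simps)
  ultimately show ?thesis using b by auto
qed

end

context conc
begin

lemma path_t:
  assumes xb: "\<forall>i<N. \<bar>xbar i\<bar> \<le> K" and t: "0 < t" and h: "0 \<le> h"
  shows "\<exists>D. ((\<lambda>s. F_N P N s h (xbar, W, z)) has_real_derivative D) (at t within {0..}) \<and>
    \<bar>D\<bar> \<le> 3/2 * K^4 + K\<^sup>2 / 2 * (opnorm_N N W / sqrt (real N * t))"
proof -
  interpret T: ogibbs Om PN "real N" Jt Gt phit Bt "Rt h" updt "K\<^sup>2 / sqrt (real N)" "3/2 * real N * K^4" "rRt h"
    by (rule ogt[OF h])
  define \<omega> where "\<omega> = (xbar, W, z)"
  define a where "a = K\<^sup>2 * sqrt (real N) * opnorm_N N W"
  have Aeq: "T.A \<omega> x = inner_N N x (matvec_N N W x) / sqrt (real N)" for x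
    unfolding T.A_def \<omega>_def Gt_def phit_def quad_sum by (simp add: sum_divide_distrib)
  obtain r where r: "AE x in PN. \<bar>Rt h \<omega> x\<bar> \<le> r" using T.bR_all by blast
  have bA: "AE x in PN. \<bar>T.A \<omega> x\<bar> \<le> a"
    using AE_x
  proof eventually_elim
    case (elim x)
    have "\<bar>inner_N N x (matvec_N N W x)\<bar> \<le> opnorm_N N W * (norm_N N x)\<^sup>2" by (rule quad_bound)
    also have "\<dots> \<le> opnorm_N N W * (real N * K\<^sup>2)"
      by (rule mult_left_mono[OF norm_N_bound[OF elim] opnorm_nonneg])
    finally have q: "\<bar>inner_N N x (matvec_N N W x)\<bar> \<le> opnorm_N N W * (real N * K\<^sup>2)" .
    have sN: "0 < sqrt (real N)" using Np by simp
    have "\<bar>T.A \<omega> x\<bar> = \<bar>inner_N N x (matvec_N N W x)\<bar> / sqrt (real N)" unfolding Aeq by (simp add: abs_divide)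
    also have "\<dots> \<le> opnorm_N N W * (real N * K\<^sup>2) / sqrt (real N)" by (rule divide_right_mono[OF q]) simp
    also have "\<dots> = a" unfolding a_def using sN
      by (simp add: field_simps)
    finally show ?case .
  qed
  have bB: "AE x in PN. \<bar>Bt \<omega> x\<bar> \<le> 3/2 * real N * K^4"
    using AE_x by eventually_elim (rule Bt_bound, use xb \<omega>_def in auto)
  interpret g: gibbs PN "T.A \<omega>" "Bt \<omega>" "Rt h \<omega>" a "3/2 * real N * K^4" r
    unfolding gibbs_def gibbs_axioms_def using prob_PN T.mA T.mBx T.mRx bA bB r by blast
  have eqF: "F_N P N s h (xbar, W, z) = ln (g.Z (sqrt s)) / real N" if "0 \<le> s" for s
    using F_t_eq[OF h that] unfolding T.psi_def \<omega>_def by simp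
  define D where "D = g.L1 (sqrt t) * (inverse (sqrt t) / 2) / real N"
  have d0: "((\<lambda>s. ln (g.Z (sqrt s))) has_real_derivative g.L1 (sqrt t) * (inverse (sqrt t) / 2)) (at t)"
    by (rule DERIV_chain2[OF g.L_deriv DERIV_real_sqrt[OF t]])
  have d1: "((\<lambda>s. ln (g.Z (sqrt s)) / real N) has_real_derivative D) (at t)"
    unfolding D_def by (rule DERIV_cdivide[OF d0])
  have d2: "((\<lambda>s. F_N P N s h (xbar, W, z)) has_real_derivative D) (at t)"
    by (rule has_field_derivative_transform_within_open[OF d1, of "{0<..}"]) (use t eqF in auto)
  have st: "0 < sqrt t" using t by simp
  have sN: "0 < sqrt (real N)" using Np by simp
  have L: "\<bar>g.L1 (sqrt t)\<bar> \<le> a + 2 * sqrt t * (3/2 * real N * K^4)"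
    using g.L1_bound[of "sqrt t"] st by simp
  have "\<bar>D\<bar> = \<bar>g.L1 (sqrt t)\<bar> / (2 * sqrt t * real N)"
    unfolding D_def using st Np by (simp add: abs_mult abs_divide inverse_eq_divide)
  also have "\<dots> \<le> (a + 2 * sqrt t * (3/2 * real N * K^4)) / (2 * sqrt t * real N)"
    by (rule divide_right_mono[OF L]) (use st Np in simp)
  also have "\<dots> = 3/2 * K^4 + K\<^sup>2 / 2 * (opnorm_N N W / sqrt (real N * t))"
  proof -
    have e: "sqrt (real N * t) = sqrt (real N) * sqrt t" by (simp add: real_sqrt_mult)
    have nn: "real N = sqrt (real N) * sqrt (real N)" by simp
    show ?thesis unfolding a_def e using st sN
      by (subst (1 2) nn) (simp add: field_simps)
  qed
  finally show ?thesis using has_field_derivative_at_within[OF d2] by blast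
qed

lemma powr_32: "0 < h \<Longrightarrow> h powr (3/2) = h * sqrt h"
proof -
  assume h: "0 < h"
  have "h powr (3/2) = h powr (1 + 1/2)" by simp
  also have "\<dots> = h powr 1 * h powr (1/2)" by (rule powr_add)
  also have "\<dots> = h * sqrt h" using h by (simp add: powr_half_sqrt)
  finally show ?thesis .
qed

lemma path_h:
  assumes xb: "\<forall>i<N. \<bar>xbar i\<bar> \<le> K" and t: "0 \<le> t" and h: "0 < h"
  shows "\<exists>D. ((\<lambda>s. F_N P N t s (xbar, W, z)) has_real_derivative D) (at h within {0..}) \<and>
    \<bar>D\<bar> \<le> 3/2 * K\<^sup>2 + K / 2 * (norm_N N z / sqrt (real N * h))"
    "\<exists>D2. (deriv (\<lambda>s. F_N P N t s (xbar, W, z)) has_real_derivative D2) (at h) \<and>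
    D2 \<ge> - (K / 4 * (norm_N N z / (sqrt (real N) * h powr (3/2))))"
proof -
  interpret T: ogibbs Om PN "real N" Jh Gh phih Bh "Rh t" updh K "3/2 * real N * K\<^sup>2" "rRh t"
    by (rule ogh[OF t])
  define \<omega> where "\<omega> = (xbar, W, z)"
  define a where "a = K * sqrt (real N) * norm_N N z"
  have Aeq: "T.A \<omega> x = inner_N N z x" for x
    unfolding T.A_def \<omega>_def Gh_def phih_def inner_N_def by simp
  obtain r where r: "AE x in PN. \<bar>Rh t \<omega> x\<bar> \<le> r" using T.bR_all by blast
  have bA: "AE x in PN. \<bar>T.A \<omega> x\<bar> \<le> a"
    using AE_x
  proof eventually_elim
    case (elim x)
    have "\<bar>inner_N N z x\<bar> \<le> norm_N N z * norm_N N x" by (rule inner_N_CS)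
    also have "\<dots> \<le> norm_N N z * (sqrt (real N) * K)"
      by (rule mult_left_mono[OF norm_N_bound'[OF elim] norm_N_nonneg])
    finally show ?case unfolding Aeq a_def by (simp add: ac_simps)
  qed
  have bB: "AE x in PN. \<bar>Bh \<omega> x\<bar> \<le> 3/2 * real N * K\<^sup>2"
    using AE_x by eventually_elim (rule Bh_bound, use xb \<omega>_def in auto)
  interpret g: gibbs PN "T.A \<omega>" "Bh \<omega>" "Rh t \<omega>" a "3/2 * real N * K\<^sup>2" r
    unfolding gibbs_def gibbs_axioms_def using prob_PN T.mA T.mBx T.mRx bA bB r by blast
  have eqF: "F_N P N t s (xbar, W, z) = ln (g.Z (sqrt s)) / real N" if "0 \<le> s" for s
    using F_h_eq[OF t that] unfolding T.psi_def \<omega>_def by simp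
  define q where "q s = g.L1 (sqrt s) / (2 * real N * sqrt s)" for s
  have dF: "((\<lambda>s. F_N P N t s (xbar, W, z)) has_real_derivative q s) (at s)" if s: "0 < s" for s
  proof -
    have d0: "((\<lambda>s. ln (g.Z (sqrt s))) has_real_derivative g.L1 (sqrt s) * (inverse (sqrt s) / 2)) (at s)"
      by (rule DERIV_chain2[OF g.L_deriv DERIV_real_sqrt[OF s]])
    have d1: "((\<lambda>s. ln (g.Z (sqrt s)) / real N) has_real_derivative g.L1 (sqrt s) * (inverse (sqrt s) / 2) / real N) (at s)"
      by (rule DERIV_cdivide[OF d0])
    have e: "g.L1 (sqrt s) * (inverse (sqrt s) / 2) / real N = q s"
      unfolding q_def by (simp add: inverse_eq_divide)
    have d2: "((\<lambda>s. F_N P N t s (xbar, W, z)) has_real_derivative g.L1 (sqrt s) * (inverse (sqrt s) / 2) / real N) (at s)"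
      by (rule has_field_derivative_transform_within_open[OF d1, of "{0<..}"]) (use s eqF in auto)
    then show ?thesis unfolding e .
  qed
  have sh: "0 < sqrt h" using h by simp
  have sN: "0 < sqrt (real N)" using Np by simp
  show "\<exists>D. ((\<lambda>s. F_N P N t s (xbar, W, z)) has_real_derivative D) (at h within {0..}) \<and>
    \<bar>D\<bar> \<le> 3/2 * K\<^sup>2 + K / 2 * (norm_N N z / sqrt (real N * h))"
  proof -
    have L: "\<bar>g.L1 (sqrt h)\<bar> \<le> a + 2 * sqrt h * (3/2 * real N * K\<^sup>2)"
      using g.L1_bound[of "sqrt h"] sh by simp
    have "\<bar>q h\<bar> = \<bar>g.L1 (sqrt h)\<bar> / (2 * real N * sqrt h)"
      unfolding q_def using sh Np by (simp add: abs_divide)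
    also have "\<dots> \<le> (a + 2 * sqrt h * (3/2 * real N * K\<^sup>2)) / (2 * real N * sqrt h)"
      by (rule divide_right_mono[OF L]) (use sh Np in simp)
    also have "\<dots> = 3/2 * K\<^sup>2 + K / 2 * (norm_N N z / sqrt (real N * h))"
    proof -
      have e: "sqrt (real N * h) = sqrt (real N) * sqrt h" by (simp add: real_sqrt_mult)
      have nn: "real N = sqrt (real N) * sqrt (real N)" by simp
      show ?thesis unfolding a_def e using sh sN
        by (subst (1 2) nn) (simp add: field_simps)
    qed
    finally show ?thesis using has_field_derivative_at_within[OF dF[OF h]] by blast
  qed
  show "\<exists>D2. (deriv (\<lambda>s. F_N P N t s (xbar, W, z)) has_real_derivative D2) (at h) \<and>
    D2 \<ge> - (K / 4 * (norm_N N z / (sqrt (real N) * h powr (3/2))))"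
  proof -
    define v where "v = sqrt h"
    have v: "0 < v" unfolding v_def using sh .
    define L1' where "L1' = g.V v + 2 * g.avg v (Bh \<omega>)"
    have dL: "((\<lambda>s. g.L1 (sqrt s)) has_real_derivative L1' * (inverse (sqrt h) / 2)) (at h)"
      unfolding L1'_def v_def by (rule DERIV_chain2[OF g.L1_deriv DERIV_real_sqrt[OF h]])
    have dG: "((\<lambda>s. 2 * real N * sqrt s) has_real_derivative 2 * real N * (inverse (sqrt h) / 2)) (at h)"
      by (rule DERIV_cmult[OF DERIV_real_sqrt[OF h]])
    define D2 where "D2 = (L1' * (inverse (sqrt h) / 2) * (2 * real N * sqrt h) - g.L1 (sqrt h) * (2 * real N * (inverse (sqrt h) / 2))) /
        ((2 * real N * sqrt h) * (2 * real N * sqrt h))"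
    have dq: "(q has_real_derivative D2) (at h)"
      unfolding q_def[abs_def] D2_def
      by (rule DERIV_divide[OF dL dG]) (use sh Np in simp)
    have dd: "(deriv (\<lambda>s. F_N P N t s (xbar, W, z)) has_real_derivative D2) (at h)"
    proof (rule has_field_derivative_transform_within_open[OF dq, of "{0<..}"])
      show "q s = deriv (\<lambda>s. F_N P N t s (xbar, W, z)) s" if "s \<in> {0<..}" for s
        using DERIV_imp_deriv[OF dF[of s]] that by simp
    qed (use h in auto)
    have D2eq: "D2 = (L1' - g.L1 v / v) / (4 * real N * v\<^sup>2)"
      unfolding D2_def v_def[symmetric] using v Np by (simp add: field_simps inverse_eq_divide power2_eq_square)
    have E: "L1' - g.L1 v / v = g.V v - g.avg v (T.A \<omega>) / v"
      unfolding L1'_def gL1_def using v by (simp add: field_simps)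
    have avA: "\<bar>g.avg v (T.A \<omega>)\<bar> \<le> a" by (rule g.avg_bound[OF g.mA g.bA])
    have V0: "0 \<le> g.V v" by (rule g.V_bounds)
    have "- a / v \<le> L1' - g.L1 v / v"
    proof -
      have "- a / v \<le> - g.avg v (T.A \<omega>) / v" using avA v by (simp add: divide_right_mono)
      then show ?thesis unfolding E using V0 by linarith
    qed
    then have "(- a / v) / (4 * real N * v\<^sup>2) \<le> D2"
      unfolding D2eq by (rule divide_right_mono) (use v Np in simp)
    moreover have "(- a / v) / (4 * real N * v\<^sup>2) = - (K / 4 * (norm_N N z / (sqrt (real N) * h powr (3/2))))"
    proof -
      have hp: "h powr (3/2) = v\<^sup>2 * v" unfolding powr_32[OF h] v_def using h by (simp add: power2_eq_square)
      have nn: "real N = sqrt (real N) * sqrt (real N)" by simp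
      show ?thesis unfolding a_def hp using v sN
        by (subst (1) nn) (simp add: field_simps)
    qed
    ultimately show ?thesis using dd by auto
  qed
qed

end

theorem lemma3p1:
  fixes P :: "real measure"
  assumes "prob_space P"
    and "sets P = sets borel"
    and "\<exists>K. AE x in P. \<bar>x\<bar> \<le> K"
  shows "\<exists>C::real. \<forall>N::nat. N \<ge> 1 \<longrightarrow>
     (\<forall>(t::real) (h::real). 0 \<le> t \<longrightarrow> 0 \<le> h \<longrightarrow>
        (\<exists>Dt Dh. ((\<lambda>s. Fbar_N P N s h) has_real_derivative Dt) (at t within {0..})
               \<and> ((\<lambda>s. Fbar_N P N t s) has_real_derivative Dh) (at h within {0..})
               \<and> \<bar>Dt\<bar> + \<bar>Dh\<bar> \<le> C))
   \<and> (AE \<omega> in Omega P N. case \<omega> of (xbar, W, z) \<Rightarrow>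
        (\<forall>(t::real) (h::real). 0 < t \<longrightarrow> 0 \<le> h \<longrightarrow>
           (\<exists>D. ((\<lambda>s. F_N P N s h \<omega>) has_real_derivative D) (at t within {0..})
                \<and> \<bar>D\<bar> \<le> C + C * opnorm_N N W / sqrt (N * t)))
      \<and> (\<forall>(t::real) (h::real). 0 \<le> t \<longrightarrow> 0 < h \<longrightarrow>
           (\<exists>D. ((\<lambda>s. F_N P N t s \<omega>) has_real_derivative D) (at h within {0..})
                \<and> \<bar>D\<bar> \<le> C + C * norm_N N z / sqrt (N * h)))
      \<and> (\<forall>(t::real) (h::real). 0 \<le> t \<longrightarrow> 0 < h \<longrightarrow>
           (\<exists>D2. (deriv (\<lambda>s. F_N P N t s \<omega>) has_real_derivative D2) (at h)
                \<and> D2 \<ge> - (C * norm_N N z / (sqrt N * h powr (3/2))))))"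
proof -
  obtain K where KP: "AE x in P. \<bar>x\<bar> \<le> K" using assms(3) by blast
  define C where "C = 2 * K^4 + 2 * K\<^sup>2 + K"
  show ?thesis
  proof (rule exI[of _ C], intro allI impI)
    fix N :: nat assume N: "1 \<le> N"
    interpret c: conc P N K
      by (rule conc.intro) (use assms(1,2) KP N in auto)
    have K0: "0 \<le> K" by (rule c.K_nonneg)
    have K4: "0 \<le> K^4" using K0 by simp
    have K2: "0 \<le> K\<^sup>2" by simp
    show "(\<forall>(t::real) (h::real). 0 \<le> t \<longrightarrow> 0 \<le> h \<longrightarrow>
        (\<exists>Dt Dh. ((\<lambda>s. Fbar_N P N s h) has_real_derivative Dt) (at t within {0..})
               \<and> ((\<lambda>s. Fbar_N P N t s) has_real_derivative Dh) (at h within {0..})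
               \<and> \<bar>Dt\<bar> + \<bar>Dh\<bar> \<le> C))
   \<and> (AE \<omega> in Omega P N. case \<omega> of (xbar, W, z) \<Rightarrow>
        (\<forall>(t::real) (h::real). 0 < t \<longrightarrow> 0 \<le> h \<longrightarrow>
           (\<exists>D. ((\<lambda>s. F_N P N s h \<omega>) has_real_derivative D) (at t within {0..})
                \<and> \<bar>D\<bar> \<le> C + C * opnorm_N N W / sqrt (N * t)))
      \<and> (\<forall>(t::real) (h::real). 0 \<le> t \<longrightarrow> 0 < h \<longrightarrow>
           (\<exists>D. ((\<lambda>s. F_N P N t s \<omega>) has_real_derivative D) (at h within {0..})
                \<and> \<bar>D\<bar> \<le> C + C * norm_N N z / sqrt (N * h)))
      \<and> (\<forall>(t::real) (h::real). 0 \<le> t \<longrightarrow> 0 < h \<longrightarrow>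
           (\<exists>D2. (deriv (\<lambda>s. F_N P N t s \<omega>) has_real_derivative D2) (at h)
                \<and> D2 \<ge> - (C * norm_N N z / (sqrt N * h powr (3/2))))))"
    proof (rule conjI)
      show "\<forall>(t::real) (h::real). 0 \<le> t \<longrightarrow> 0 \<le> h \<longrightarrow>
        (\<exists>Dt Dh. ((\<lambda>s. Fbar_N P N s h) has_real_derivative Dt) (at t within {0..})
               \<and> ((\<lambda>s. Fbar_N P N t s) has_real_derivative Dh) (at h within {0..})
               \<and> \<bar>Dt\<bar> + \<bar>Dh\<bar> \<le> C)"
      proof (intro allI impI)
        fix t h :: real assume t: "0 \<le> t" and h: "0 \<le> h"
        obtain Dt where Dt: "((\<lambda>s. Fbar_N P N s h) has_real_derivative Dt) (at t within {0..})" "\<bar>Dt\<bar> \<le> 2 * K^4"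
          using c.Fbar_t[OF t h] by blast
        obtain Dh where Dh: "((\<lambda>s. Fbar_N P N t s) has_real_derivative Dh) (at h within {0..})" "\<bar>Dh\<bar> \<le> 2 * K\<^sup>2"
          using c.Fbar_h[OF t h] by blast
        have "\<bar>Dt\<bar> + \<bar>Dh\<bar> \<le> C" unfolding C_def using Dt(2) Dh(2) K0 by linarith
        then show "\<exists>Dt Dh. ((\<lambda>s. Fbar_N P N s h) has_real_derivative Dt) (at t within {0..})
               \<and> ((\<lambda>s. Fbar_N P N t s) has_real_derivative Dh) (at h within {0..})
               \<and> \<bar>Dt\<bar> + \<bar>Dh\<bar> \<le> C" using Dt(1) Dh(1) by blast
      qed
      show "AE \<omega> in Omega P N. case \<omega> of (xbar, W, z) \<Rightarrow>
        (\<forall>(t::real) (h::real). 0 < t \<longrightarrow> 0 \<le> h \<longrightarrow>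
           (\<exists>D. ((\<lambda>s. F_N P N s h \<omega>) has_real_derivative D) (at t within {0..})
                \<and> \<bar>D\<bar> \<le> C + C * opnorm_N N W / sqrt (N * t)))
      \<and> (\<forall>(t::real) (h::real). 0 \<le> t \<longrightarrow> 0 < h \<longrightarrow>
           (\<exists>D. ((\<lambda>s. F_N P N t s \<omega>) has_real_derivative D) (at h within {0..})
                \<and> \<bar>D\<bar> \<le> C + C * norm_N N z / sqrt (N * h)))
      \<and> (\<forall>(t::real) (h::real). 0 \<le> t \<longrightarrow> 0 < h \<longrightarrow>
           (\<exists>D2. (deriv (\<lambda>s. F_N P N t s \<omega>) has_real_derivative D2) (at h)
                \<and> D2 \<ge> - (C * norm_N N z / (sqrt N * h powr (3/2)))))"
        using c.AE_xbar
      proof eventually_elim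
        case (elim \<omega>)
        obtain xbar W z where w: "\<omega> = (xbar, W, z)" by (cases \<omega>) auto
        have xb: "\<forall>i<N. \<bar>xbar i\<bar> \<le> K" using elim w by simp
        have p1: "\<forall>(t::real) (h::real). 0 < t \<longrightarrow> 0 \<le> h \<longrightarrow>
           (\<exists>D. ((\<lambda>s. F_N P N s h (xbar, W, z)) has_real_derivative D) (at t within {0..})
                \<and> \<bar>D\<bar> \<le> C + C * opnorm_N N W / sqrt (N * t))"
        proof (intro allI impI)
          fix t h :: real assume t: "0 < t" and h: "0 \<le> h"
          obtain D where D: "((\<lambda>s. F_N P N s h (xbar, W, z)) has_real_derivative D) (at t within {0..})"
            "\<bar>D\<bar> \<le> 3/2 * K^4 + K\<^sup>2 / 2 * (opnorm_N N W / sqrt (real N * t))"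
            using c.path_t[OF xb t h] by blast
          define X where "X = opnorm_N N W / sqrt (real N * t)"
          have X0: "0 \<le> X" unfolding X_def using opnorm_nonneg[of N W] t by simp
          have "K\<^sup>2 / 2 * X \<le> C * X" by (rule mult_right_mono[OF _ X0]) (use K0 K4 in \<open>simp add: C_def\<close>)
          moreover have "3/2 * K^4 \<le> C" unfolding C_def using K0 K4 K2 by simp
          ultimately have "\<bar>D\<bar> \<le> C + C * X" using D(2) unfolding X_def by linarith
          then have "\<bar>D\<bar> \<le> C + C * opnorm_N N W / sqrt (N * t)" unfolding X_def by simp
          then show "\<exists>D. ((\<lambda>s. F_N P N s h (xbar, W, z)) has_real_derivative D) (at t within {0..})
                \<and> \<bar>D\<bar> \<le> C + C * opnorm_N N W / sqrt (N * t)" using D(1) by blast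
        qed
        have p2: "\<forall>(t::real) (h::real). 0 \<le> t \<longrightarrow> 0 < h \<longrightarrow>
           (\<exists>D. ((\<lambda>s. F_N P N t s (xbar, W, z)) has_real_derivative D) (at h within {0..})
                \<and> \<bar>D\<bar> \<le> C + C * norm_N N z / sqrt (N * h))"
        proof (intro allI impI)
          fix t h :: real assume t: "0 \<le> t" and h: "0 < h"
          obtain D where D: "((\<lambda>s. F_N P N t s (xbar, W, z)) has_real_derivative D) (at h within {0..})"
            "\<bar>D\<bar> \<le> 3/2 * K\<^sup>2 + K / 2 * (norm_N N z / sqrt (real N * h))"
            using c.path_h(1)[OF xb t h] by blast
          define X where "X = norm_N N z / sqrt (real N * h)"
          have X0: "0 \<le> X" unfolding X_def using norm_N_nonneg[of N z] h by simp
          have "K / 2 * X \<le> C * X" by (rule mult_right_mono[OF _ X0]) (use K0 K4 K2 in \<open>simp add: C_def\<close>)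
          moreover have "3/2 * K\<^sup>2 \<le> C" unfolding C_def using K0 K4 K2 by simp
          ultimately have "\<bar>D\<bar> \<le> C + C * X" using D(2) unfolding X_def by linarith
          then have "\<bar>D\<bar> \<le> C + C * norm_N N z / sqrt (N * h)" unfolding X_def by simp
          then show "\<exists>D. ((\<lambda>s. F_N P N t s (xbar, W, z)) has_real_derivative D) (at h within {0..})
                \<and> \<bar>D\<bar> \<le> C + C * norm_N N z / sqrt (N * h)" using D(1) by blast
        qed
        have p3: "\<forall>(t::real) (h::real). 0 \<le> t \<longrightarrow> 0 < h \<longrightarrow>
           (\<exists>D2. (deriv (\<lambda>s. F_N P N t s (xbar, W, z)) has_real_derivative D2) (at h)
                \<and> D2 \<ge> - (C * norm_N N z / (sqrt N * h powr (3/2))))"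
        proof (intro allI impI)
          fix t h :: real assume t: "0 \<le> t" and h: "0 < h"
          obtain D2 where D2: "(deriv (\<lambda>s. F_N P N t s (xbar, W, z)) has_real_derivative D2) (at h)"
            "D2 \<ge> - (K / 4 * (norm_N N z / (sqrt (real N) * h powr (3/2))))"
            using c.path_h(2)[OF xb t h] by blast
          define X where "X = norm_N N z / (sqrt (real N) * h powr (3/2))"
          have X0: "0 \<le> X" unfolding X_def using norm_N_nonneg[of N z] h by simp
          have "K / 4 * X \<le> C * X" by (rule mult_right_mono[OF _ X0]) (use K0 K4 K2 in \<open>simp add: C_def\<close>)
          then have "D2 \<ge> - (C * X)" using D2(2) unfolding X_def by linarith
          then have "D2 \<ge> - (C * norm_N N z / (sqrt N * h powr (3/2)))" unfolding X_def by simp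
          then show "\<exists>D2. (deriv (\<lambda>s. F_N P N t s (xbar, W, z)) has_real_derivative D2) (at h)
                \<and> D2 \<ge> - (C * norm_N N z / (sqrt N * h powr (3/2)))" using D2(1) by blast
        qed
        show ?case unfolding w using p1 p2 p3 by simp
      qed
    qed
  qed
qed

end
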